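(* Under the same setup ($N\ge2$, $\mathcal G$ connected with positive edge weights, $\alpha>0$), for all $m,k,\tau,\gamma>0$ one has $\|H_{\mathrm{DAPI}}\|_2^2<\|H_{\mathrm{std}}\|_2^2$.
   Context: $L_B$ is the weighted Laplacian of $\mathcal G$ (edge weights $b_{ij}>0$), $L_G=\alpha L_B$, $L_C=\gamma L_B$, $L_G^{1/2}$ its PSD square root. $H_{\mathrm{std}}$: $\dot\theta=\omega$, $\dot\omega=-\tfrac m\tau L_B\theta-\tfrac1\tau\omega+\tfrac1\tau w$, $y=L_G^{1/2}\theta$. $H_{\mathrm{DAPI}}$: $\dot\theta=\omega$, $\dot\omega=-\tfrac m\tau L_B\theta-\tfrac1\tau\omega+\tfrac1\tau\Omega+\tfrac1\tau w$, $\dot\Omega=-\tfrac1k\omega-\tfrac1kL_C\Omega$, $y=L_G^{1/2}\theta$. For a system $(A,B,C)$, $\|H\|_2^2:=\int_0^\infty\operatorname{tr}(Ce^{At}BB^Te^{A^Tt}C^T)\,dt$. *)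

theory Defs
  imports "HOL-Analysis.Analysis"
begin

primrec matpow :: "real^'a^'a \<Rightarrow> nat \<Rightarrow> real^'a^'a" where
  "matpow A 0 = mat 1"
| "matpow A (Suc k) = A ** matpow A k"

definition mexp :: "real^'a^'a \<Rightarrow> real^'a^'a" where
  "mexp A = (\<chi> i j. \<Sum>k. (matpow A k $ i $ j) / fact k)"

definition h2sq :: "real^'s^'s \<Rightarrow> real^'u^'s \<Rightarrow> real^'s^'y \<Rightarrow> real" where
  "h2sq A B C = (LINT t:{0..}|lborel.
      trace (C ** mexp (t *\<^sub>R A) ** B ** transpose B ** mexp (t *\<^sub>R transpose A) ** transpose C))"

definition psd :: "real^'n^'n \<Rightarrow> bool" where
  "psd M \<longleftrightarrow> transpose M = M \<and> (\<forall>x. 0 \<le> x \<bullet> (M *v x))"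

definition psd_sqrt :: "real^'n^'n \<Rightarrow> real^'n^'n" where
  "psd_sqrt M = (THE S. psd S \<and> S ** S = M)"

definition laplacian :: "('n::finite \<Rightarrow> 'n \<Rightarrow> real) \<Rightarrow> real^'n^'n" where
  "laplacian b = (\<chi> i j. if i = j then (\<Sum>k\<in>UNIV - {i}. b i k) else - b i j)"

definition connected_weights :: "('n \<Rightarrow> 'n \<Rightarrow> real) \<Rightarrow> bool" where
  "connected_weights b \<longleftrightarrow> (\<forall>i j. (i, j) \<in> {(x, y). b x y > 0}\<^sup>*)"

fun bidx2 :: "'n + 'n \<Rightarrow> nat \<times> 'n" where
  "bidx2 (Inl i) = (0, i)"
| "bidx2 (Inr i) = (1, i)"

fun bidx3 :: "('n + 'n) + 'n \<Rightarrow> nat \<times> 'n" where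
  "bidx3 (Inl (Inl i)) = (0, i)"
| "bidx3 (Inl (Inr i)) = (1, i)"
| "bidx3 (Inr i) = (2, i)"

definition blk2 :: "(nat \<Rightarrow> nat \<Rightarrow> real^'n^'n) \<Rightarrow> real^('n+'n)^('n+'n)" where
  "blk2 F = (\<chi> r c. F (fst (bidx2 r)) (fst (bidx2 c)) $ snd (bidx2 r) $ snd (bidx2 c))"

definition blkcol2 :: "(nat \<Rightarrow> real^'n^'n) \<Rightarrow> real^'n^('n+'n)" where
  "blkcol2 F = (\<chi> r c. F (fst (bidx2 r)) $ snd (bidx2 r) $ c)"

definition blkrow2 :: "(nat \<Rightarrow> real^'n^'n) \<Rightarrow> real^('n+'n)^'n" where
  "blkrow2 F = (\<chi> r c. F (fst (bidx2 c)) $ r $ snd (bidx2 c))"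

definition blk3 :: "(nat \<Rightarrow> nat \<Rightarrow> real^'n^'n) \<Rightarrow> real^(('n+'n)+'n)^(('n+'n)+'n)" where
  "blk3 F = (\<chi> r c. F (fst (bidx3 r)) (fst (bidx3 c)) $ snd (bidx3 r) $ snd (bidx3 c))"

definition blkcol3 :: "(nat \<Rightarrow> real^'n^'n) \<Rightarrow> real^'n^(('n+'n)+'n)" where
  "blkcol3 F = (\<chi> r c. F (fst (bidx3 r)) $ snd (bidx3 r) $ c)"

definition blkrow3 :: "(nat \<Rightarrow> real^'n^'n) \<Rightarrow> real^(('n+'n)+'n)^'n" where
  "blkrow3 F = (\<chi> r c. F (fst (bidx3 c)) $ r $ snd (bidx3 c))"

text \<open>H_std: state (theta, omega).\<close>

definition A_std :: "real \<Rightarrow> real \<Rightarrow> real^'n^'n \<Rightarrow> real^('n+'n)^('n+'n)" where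
  "A_std m \<tau> LB = blk2 (\<lambda>p q.
     if p = 0 \<and> q = 1 then mat 1
     else if p = 1 \<and> q = 0 then - ((m / \<tau>) *\<^sub>R LB)
     else if p = 1 \<and> q = 1 then - ((1 / \<tau>) *\<^sub>R mat 1)
     else 0)"

definition B_std :: "real \<Rightarrow> real^'n^('n+'n)" where
  "B_std \<tau> = blkcol2 (\<lambda>p. if p = 1 then (1 / \<tau>) *\<^sub>R mat 1 else 0)"

definition C_std :: "real^'n^'n \<Rightarrow> real^('n+'n)^'n" where
  "C_std LG = blkrow2 (\<lambda>p. if p = 0 then psd_sqrt LG else 0)"

text \<open>H_DAPI: state (theta, omega, Omega).\<close>

definition A_dapi :: "real \<Rightarrow> real \<Rightarrow> real \<Rightarrow> real^'n^'n \<Rightarrow> real^'n^'n \<Rightarrow> real^(('n+'n)+'n)^(('n+'n)+'n)" where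
  "A_dapi m \<tau> k LB LC = blk3 (\<lambda>p q.
     if p = 0 \<and> q = 1 then mat 1
     else if p = 1 \<and> q = 0 then - ((m / \<tau>) *\<^sub>R LB)
     else if p = 1 \<and> q = 1 then - ((1 / \<tau>) *\<^sub>R mat 1)
     else if p = 1 \<and> q = 2 then (1 / \<tau>) *\<^sub>R mat 1
     else if p = 2 \<and> q = 1 then - ((1 / k) *\<^sub>R mat 1)
     else if p = 2 \<and> q = 2 then - ((1 / k) *\<^sub>R LC)
     else 0)"

definition B_dapi :: "real \<Rightarrow> real^'n^(('n+'n)+'n)" where
  "B_dapi \<tau> = blkcol3 (\<lambda>p. if p = 1 then (1 / \<tau>) *\<^sub>R mat 1 else 0)"

definition C_dapi :: "real^'n^'n \<Rightarrow> real^(('n+'n)+'n)^'n" where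
  "C_dapi LG = blkrow3 (\<lambda>p. if p = 0 then psd_sqrt LG else 0)"

end

theory Submission
  imports Defs "HOL-Real_Asymp.Real_Asymp"
begin

lemma matpow_bound:
  fixes A :: "real^'n^'n"
  shows "\<bar>matpow A k $ i $ j\<bar> \<le> (1 + (\<Sum>i\<in>UNIV. \<Sum>j\<in>UNIV. \<bar>A$i$j\<bar>)) ^ k"
proof (induction k arbitrary: i j)
  case 0
  then show ?case by (simp add: mat_def)
next
  case (Suc k)
  define R where "R = 1 + (\<Sum>i\<in>UNIV. \<Sum>j\<in>UNIV. \<bar>A$i$j\<bar>)"
  have R0: "0 \<le> R" unfolding R_def by (simp add: sum_nonneg)
  have rowle: "(\<Sum>l\<in>UNIV. \<bar>A$i$l\<bar>) \<le> R"
  proof -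
    have "(\<Sum>l\<in>UNIV. \<bar>A$i$l\<bar>) \<le> (\<Sum>i\<in>UNIV. \<Sum>j\<in>UNIV. \<bar>A$i$j\<bar>)"
      by (rule member_le_sum[where f="\<lambda>i. \<Sum>j\<in>UNIV. \<bar>A$i$j\<bar>"]) (auto simp: sum_nonneg)
    then show ?thesis unfolding R_def by simp
  qed
  have "\<bar>matpow A (Suc k) $ i $ j\<bar> = \<bar>\<Sum>l\<in>UNIV. A$i$l * matpow A k $ l $ j\<bar>"
    by (simp add: matrix_matrix_mult_def)
  also have "\<dots> \<le> (\<Sum>l\<in>UNIV. \<bar>A$i$l\<bar> * R^k)"
    apply (rule order_trans[OF sum_abs])
    apply (rule sum_mono)
    using Suc.IH unfolding R_def by (simp add: abs_mult mult_left_mono)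
  also have "\<dots> = (\<Sum>l\<in>UNIV. \<bar>A$i$l\<bar>) * R^k" by (simp add: sum_distrib_right)
  also have "\<dots> \<le> R * R^k" using rowle R0 by (simp add: mult_right_mono)
  finally show ?case unfolding R_def by simp
qed

lemma matpow_scale: "matpow (t *\<^sub>R (A::real^'n^'n)) k = t^k *\<^sub>R matpow A k"
  by (induction k) (simp_all add: matrix_scalar_ac scalar_matrix_assoc[symmetric])

lemma summable_mexp_entry:
  fixes A :: "real^'n^'n"
  shows "summable (\<lambda>k. (matpow A k $ i $ j / fact k) * t^k)"
proof -
  define R where "R = 1 + (\<Sum>i\<in>UNIV. \<Sum>j\<in>UNIV. \<bar>A$i$j\<bar>)"
  have R0: "0 \<le> R" unfolding R_def by (simp add: sum_nonneg)
  have s: "summable (\<lambda>k. inverse (fact k) * (R * \<bar>t\<bar>)^k)" by (rule summable_exp)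
  show ?thesis
  proof (rule summable_comparison_test'[OF s])
    fix k :: nat
    have "norm (matpow A k $ i $ j / fact k * t^k) = \<bar>matpow A k $ i $ j\<bar> * \<bar>t\<bar>^k / fact k"
      by (simp add: abs_mult power_abs)
    also have "\<dots> \<le> R^k * \<bar>t\<bar>^k / fact k"
      using matpow_bound[of A k i j] unfolding R_def
      by (intro divide_right_mono mult_right_mono) auto
    also have "\<dots> = inverse (fact k) * (R * \<bar>t\<bar>)^k" by (simp add: power_mult_distrib field_simps)
    finally show "norm (matpow A k $ i $ j / fact k * t^k) \<le> inverse (fact k) * (R * \<bar>t\<bar>)^k" .
  qed
qed

lemma mexp_scale_entry:
  "mexp (t *\<^sub>R (A::real^'n^'n)) $ i $ j = (\<Sum>k. (matpow A k $ i $ j / fact k) * t^k)"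
  by (simp add: mexp_def matpow_scale mult.commute)

lemma mexp_zero_scale: "mexp (0 *\<^sub>R (A::real^'n^'n)) = mat 1"
proof -
  have "mexp (0 *\<^sub>R A) $ i $ j = mat 1 $ i $ j" for i j
    unfolding mexp_scale_entry using powser_zero[of "\<lambda>k. matpow A k $ i $ j / fact k"] by simp
  then show ?thesis by (simp add: vec_eq_iff)
qed

lemma suminf_sum_mult:
  fixes f :: "'a \<Rightarrow> nat \<Rightarrow> real"
  assumes "\<And>l. summable (f l)" "finite S"
  shows "(\<Sum>l\<in>S. c l * (\<Sum>k. f l k)) = (\<Sum>k. \<Sum>l\<in>S. c l * f l k)"
proof -
  have "(\<Sum>l\<in>S. c l * (\<Sum>k. f l k)) = (\<Sum>l\<in>S. (\<Sum>k. c l * f l k))"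
    using assms by (simp add: suminf_mult)
  also have "\<dots> = (\<Sum>k. \<Sum>l\<in>S. c l * f l k)"
    by (rule suminf_sum[symmetric]) (use assms in \<open>auto intro: summable_mult\<close>)
  finally show ?thesis .
qed

lemma mexp_deriv_entry:
  fixes A :: "real^'n^'n"
  shows "((\<lambda>t. mexp (t *\<^sub>R A) $ i $ j) has_real_derivative ((A ** mexp (t *\<^sub>R A)) $ i $ j)) (at t)"
proof -
  define c where "c = (\<lambda>k. matpow A k $ i $ j / fact k)"
  have d: "((\<lambda>t. \<Sum>k. c k * t^k) has_real_derivative (\<Sum>k. diffs c k * t^k)) (at t)"
    by (rule termdiffs_strong_converges_everywhere) (unfold c_def, rule summable_mexp_entry)
  have "diffs c k = matpow A (Suc k) $ i $ j / fact k" for k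
  proof -
    have "real (Suc k) * (x / fact (Suc k)) = x / fact k" for x :: real
      by (simp add: fact_Suc del: of_nat_Suc)
    then show ?thesis by (simp add: diffs_def c_def del: matpow.simps of_nat_Suc)
  qed
  then have "(\<Sum>k. diffs c k * t^k) = (\<Sum>k. \<Sum>l\<in>UNIV. A$i$l * (matpow A k $ l $ j / fact k * t^k))"
    by (simp add: matrix_matrix_mult_def sum_distrib_right sum_divide_distrib mult.assoc)
  also have "\<dots> = (\<Sum>l\<in>UNIV. A$i$l * (\<Sum>k. matpow A k $ l $ j / fact k * t^k))"
    by (rule suminf_sum_mult[symmetric], rule summable_mexp_entry, simp)
  also have "\<dots> = (A ** mexp (t *\<^sub>R A)) $ i $ j"
    by (simp add: matrix_matrix_mult_def mexp_scale_entry)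
  finally show ?thesis using d by (simp add: c_def mexp_scale_entry)
qed

lemma matpow_commute_gen:
  fixes A P :: "real^'n^'n"
  assumes "P ** A = A ** P"
  shows "P ** matpow A k = matpow A k ** P"
proof (induction k)
  case 0 then show ?case by simp
next
  case (Suc k)
  have "P ** matpow A (Suc k) = (P ** A) ** matpow A k" by (simp add: matrix_mul_assoc)
  also have "\<dots> = A ** (P ** matpow A k)" using assms by (simp add: matrix_mul_assoc)
  also have "\<dots> = (A ** matpow A k) ** P" using Suc by (simp add: matrix_mul_assoc)
  finally show ?case by simp
qed

lemma mexp_commute:
  fixes A P :: "real^'n^'n"
  assumes "P ** A = A ** P"
  shows "P ** mexp (t *\<^sub>R A) = mexp (t *\<^sub>R A) ** P"
proof -
  have "(P ** mexp (t *\<^sub>R A)) $ i $ j = (mexp (t *\<^sub>R A) ** P) $ i $ j" for i j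
  proof -
    have "(P ** mexp (t *\<^sub>R A)) $ i $ j = (\<Sum>l\<in>UNIV. P$i$l * (\<Sum>k. matpow A k $ l $ j / fact k * t^k))"
      by (simp add: matrix_matrix_mult_def mexp_scale_entry)
    also have "\<dots> = (\<Sum>k. \<Sum>l\<in>UNIV. P$i$l * (matpow A k $ l $ j / fact k * t^k))"
      by (rule suminf_sum_mult, rule summable_mexp_entry, simp)
    also have "\<dots> = (\<Sum>k. (P ** matpow A k) $ i $ j / fact k * t^k)"
      by (simp add: matrix_matrix_mult_def sum_distrib_right sum_divide_distrib mult.assoc)
    also have "\<dots> = (\<Sum>k. (matpow A k ** P) $ i $ j / fact k * t^k)"
      using matpow_commute_gen[OF assms] by simp
    also have "\<dots> = (\<Sum>k. \<Sum>l\<in>UNIV. P$l$j * (matpow A k $ i $ l / fact k * t^k))"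
      by (rule suminf_cong) (simp add: matrix_matrix_mult_def sum_distrib_right sum_distrib_left sum_divide_distrib mult_ac)
    also have "\<dots> = (\<Sum>l\<in>UNIV. P$l$j * (\<Sum>k. matpow A k $ i $ l / fact k * t^k))"
      by (rule suminf_sum_mult[symmetric], rule summable_mexp_entry, simp)
    also have "\<dots> = (mexp (t *\<^sub>R A) ** P) $ i $ j"
      by (simp add: matrix_matrix_mult_def mexp_scale_entry mult.commute)
    finally show ?thesis .
  qed
  then show ?thesis by (simp add: vec_eq_iff)
qed

lemma matpow_transpose: "matpow (transpose (A::real^'n^'n)) k = transpose (matpow A k)"
proof (induction k)
  case 0 then show ?case by simp
next
  case (Suc k)
  have "matpow (transpose A) (Suc k) = transpose (matpow A k ** A)"
    using Suc by (simp add: matrix_transpose_mul)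
  also have "matpow A k ** A = A ** matpow A k"
    using matpow_commute_gen[of A A k] by simp
  finally show ?case by simp
qed

lemma mexp_transpose: "mexp (t *\<^sub>R transpose (A::real^'n^'n)) = transpose (mexp (t *\<^sub>R A))"
  by (simp add: vec_eq_iff mexp_scale_entry matpow_transpose, simp add: transpose_def mexp_scale_entry)

lemma mexp_vec_deriv:
  fixes A :: "real^'n^'n"
  shows "((\<lambda>t. (mexp (t *\<^sub>R A) *v y) $ r) has_real_derivative (A *v (mexp (t *\<^sub>R A) *v y)) $ r) (at t)"
proof -
  have "((\<lambda>t. \<Sum>c\<in>UNIV. mexp (t *\<^sub>R A) $ r $ c * y $ c) has_real_derivative
          (\<Sum>c\<in>UNIV. (A ** mexp (t *\<^sub>R A)) $ r $ c * y $ c)) (at t)"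
    by (intro DERIV_sum DERIV_cmult_right mexp_deriv_entry)
  moreover have "(A *v (mexp (t *\<^sub>R A) *v y)) $ r = (\<Sum>c\<in>UNIV. (A ** mexp (t *\<^sub>R A)) $ r $ c * y $ c)"
    by (simp add: matrix_vector_mul_assoc, simp add: matrix_vector_mult_def)
  moreover have "(\<lambda>t. (mexp (t *\<^sub>R A) *v y) $ r) = (\<lambda>t. \<Sum>c\<in>UNIV. mexp (t *\<^sub>R A) $ r $ c * y $ c)"
    by (simp add: matrix_vector_mult_def)
  ultimately show ?thesis by simp
qed

lemma sym_dot:
  fixes M :: "real^'n^'n"
  assumes "transpose M = M"
  shows "(M *v x) \<bullet> y = x \<bullet> (M *v y)"
proof -
  have "M *v x = x v* M" using assms transpose_matrix_vector[of M x] by simp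
  then show ?thesis by (simp add: dot_lmul_matrix)
qed

lemma quad_nonpos_zero:
  fixes c d :: real
  assumes "\<And>t. 2*t*c + t^2*d \<le> 0"
  shows "c = 0"
proof (rule ccontr)
  assume c: "c \<noteq> 0"
  define w where "w = \<bar>d\<bar> + 1"
  define t where "t = c / w"
  have p: "w > 0" unfolding w_def by simp
  have "2*t*c + t^2*d = c^2 * (2*w + d) / w^2"
    unfolding t_def using p by (simp add: field_simps power2_eq_square)
  moreover have "c^2 * (2*w + d) / w^2 > 0"
  proof -
    have "c^2 > 0" using c by simp
    moreover have "2*w + d > 0" unfolding w_def by (simp add: abs_if)
    moreover have "w^2 > 0" using p by simp
    ultimately show ?thesis by simp
  qed
  ultimately show False using assms[of t] by linarith
qed

lemma quadform_expand:
  fixes M :: "real^'n^'n"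
  assumes "transpose M = M"
  shows "(x + t *\<^sub>R y) \<bullet> (M *v (x + t *\<^sub>R y)) = x \<bullet> (M *v x) + 2*t*(y \<bullet> (M *v x)) + t^2 * (y \<bullet> (M *v y))"
proof -
  have "x \<bullet> (M *v y) = y \<bullet> (M *v x)" using sym_dot[OF assms, of y x] by (simp add: inner_commute)
  then show ?thesis
    by (simp add: matrix_vector_right_distrib matrix_vector_mult_scaleR inner_add_left inner_add_right
        algebra_simps power2_eq_square)
qed

lemma eig_exists:
  fixes M :: "real^'n^'n"
  assumes sym: "transpose M = M" and V: "subspace V" "V \<noteq> {0}" and inv: "\<And>x. x \<in> V \<Longrightarrow> M *v x \<in> V"
  shows "\<exists>x \<mu>. x \<in> V \<and> norm x = 1 \<and> M *v x = \<mu> *\<^sub>R x"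
proof -
  define K where "K = sphere 0 1 \<inter> V"
  have "compact K" unfolding K_def
    by (intro compact_Int_closed[OF compact_sphere] closed_subspace V)
  obtain z where z: "z \<in> V" "z \<noteq> 0" using V subspace_0[OF V(1)] by blast
  have "z /\<^sub>R norm z \<in> K" unfolding K_def using z V by (auto simp: subspace_scale)
  then have Kne: "K \<noteq> {}" by auto
  have cont: "continuous_on K (\<lambda>x. x \<bullet> (M *v x))" by (intro continuous_intros)
  obtain x where x: "x \<in> K" and xmax: "\<And>y. y \<in> K \<Longrightarrow> y \<bullet> (M *v y) \<le> x \<bullet> (M *v x)"
    using continuous_attains_sup[OF \<open>compact K\<close> Kne cont] by auto
  define \<mu> where "\<mu> = x \<bullet> (M *v x)"
  have xV: "x \<in> V" and nx: "norm x = 1" using x unfolding K_def by auto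
  have bound: "w \<bullet> (M *v w) \<le> \<mu> * (w \<bullet> w)" if w: "w \<in> V" for w
  proof (cases "w = 0")
    case True then show ?thesis by simp
  next
    case False
    define u where "u = w /\<^sub>R norm w"
    have "u \<in> K" unfolding K_def u_def using w False V by (auto simp: subspace_scale)
    then have "u \<bullet> (M *v u) \<le> \<mu>" using xmax unfolding \<mu>_def by blast
    moreover have "u \<bullet> (M *v u) = (w \<bullet> (M *v w)) / (norm w)^2"
      unfolding u_def by (simp add: matrix_vector_mult_scaleR power2_eq_square field_simps)
    ultimately have "w \<bullet> (M *v w) \<le> \<mu> * (norm w)^2" using False
      by (simp add: divide_le_eq)
    then show ?thesis by (simp add: power2_norm_eq_inner)
  qed
  define r where "r = M *v x - \<mu> *\<^sub>R x"
  have rV: "r \<in> V" unfolding r_def using inv[OF xV] xV V by (simp add: subspace_diff subspace_scale)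
  have orth: "y \<bullet> r = 0" if y: "y \<in> V" for y
  proof -
    have "2*t*(y \<bullet> r) + t^2*(y \<bullet> (M *v y) - \<mu> * (y \<bullet> y)) \<le> 0" for t
    proof -
      have "x + t *\<^sub>R y \<in> V" using xV y V by (simp add: subspace_add subspace_scale)
      from bound[OF this] have le: "(x + t *\<^sub>R y) \<bullet> (M *v (x + t *\<^sub>R y)) \<le> \<mu> * ((x + t *\<^sub>R y) \<bullet> (x + t *\<^sub>R y))" .
      have xx: "x \<bullet> x = 1" using nx by (simp add: norm_eq_1)
      have e1: "(x + t *\<^sub>R y) \<bullet> (M *v (x + t *\<^sub>R y)) = \<mu> + 2*t*(y \<bullet> (M *v x)) + t^2 * (y \<bullet> (M *v y))"
        unfolding quadform_expand[OF sym] \<mu>_def ..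
      have e2: "(x + t *\<^sub>R y) \<bullet> (x + t *\<^sub>R y) = 1 + 2*t*(x \<bullet> y) + t^2*(y \<bullet> y)"
        using xx inner_commute[of y x] by (simp add: inner_add_left inner_add_right power2_eq_square algebra_simps)
      have e3: "y \<bullet> r = y \<bullet> (M *v x) - \<mu> * (x \<bullet> y)"
        unfolding r_def by (simp add: inner_diff_right inner_commute)
      have e4: "2*t*(y \<bullet> (M *v x) - \<mu> * (x \<bullet> y)) + t^2*(y \<bullet> (M *v y) - \<mu> * (y \<bullet> y))
          = (\<mu> + 2*t*(y \<bullet> (M *v x)) + t^2 * (y \<bullet> (M *v y))) - \<mu> * (1 + 2*t*(x \<bullet> y) + t^2*(y \<bullet> y))"
        by (simp add: algebra_simps)
      show ?thesis using le e1 e2 e3 e4 by simp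
    qed
    then show ?thesis by (rule quad_nonpos_zero)
  qed
  have "r \<bullet> r = 0" using orth[OF rV] .
  then have "r = 0" by simp
  then show ?thesis using xV nx unfolding r_def by auto
qed

definition onb :: "(real^'n) set \<Rightarrow> bool" where
  "onb Bs \<longleftrightarrow> finite Bs \<and> pairwise orthogonal Bs \<and> (\<forall>v\<in>Bs. norm v = 1) \<and> span Bs = UNIV"

lemma spectral_sub:
  fixes M :: "real^'n^'n"
  assumes sym: "transpose M = M"
  shows "subspace V \<Longrightarrow> (\<forall>x\<in>V. M *v x \<in> V) \<Longrightarrow> dim V \<le> n \<Longrightarrow>
    \<exists>Bs. finite Bs \<and> Bs \<subseteq> V \<and> pairwise orthogonal Bs \<and> (\<forall>v\<in>Bs. norm v = 1 \<and> (\<exists>\<mu>. M *v v = \<mu> *\<^sub>R v)) \<and> V \<subseteq> span Bs"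
proof (induction n arbitrary: V)
  case 0
  then have "V \<subseteq> {0}" by simp
  then show ?case by (intro exI[of _ "{}"]) auto
next
  case (Suc n)
  show ?case
  proof (cases "V \<subseteq> {0}")
    case True
    then show ?thesis by (intro exI[of _ "{}"]) auto
  next
    case False
    then have "V \<noteq> {0}" by auto
    with eig_exists[OF sym Suc.prems(1)] Suc.prems(2)
    obtain x \<mu> where x: "x \<in> V" "norm x = 1" "M *v x = \<mu> *\<^sub>R x" by blast
    define V' where "V' = V \<inter> {y. orthogonal x y}"
    have sV': "subspace V'" unfolding V'_def
      using subspace_Int[of "{V, {y. orthogonal x y}}" id] Suc.prems(1) subspace_orthogonal_to_vector[of x]
      by auto
    have invV': "\<forall>y\<in>V'. M *v y \<in> V'"
    proof
      fix y assume y: "y \<in> V'"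
      have "x \<bullet> (M *v y) = (M *v x) \<bullet> y" using sym_dot[OF sym, of x y] by simp
      also have "\<dots> = 0" using y x(3) unfolding V'_def orthogonal_def by simp
      finally show "M *v y \<in> V'" using y Suc.prems(2) unfolding V'_def orthogonal_def by auto
    qed
    have "x \<notin> V'" using x(2) unfolding V'_def orthogonal_def by (auto simp: norm_eq_1)
    have e1: "span V' = V'" using sV' by simp
    have e2: "span V = V" using Suc.prems(1) by simp
    have e3: "V' \<subset> V" unfolding V'_def using x(1) \<open>x \<notin> V'\<close> unfolding V'_def by auto
    have "span V' \<subset> span V" unfolding e1 e2 by (rule e3)
    then have "dim V' < dim V" by (rule dim_psubset)
    then have "dim V' \<le> n" using Suc.prems(3) by simp
    from Suc.IH[OF sV' invV' this] obtain Bs where Bs: "finite Bs" "Bs \<subseteq> V'" "pairwise orthogonal Bs"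
      "\<forall>v\<in>Bs. norm v = 1 \<and> (\<exists>\<mu>. M *v v = \<mu> *\<^sub>R v)" "V' \<subseteq> span Bs" by blast
    show ?thesis
    proof (intro exI[of _ "insert x Bs"] conjI)
      show "finite (insert x Bs)" using Bs by simp
      show "insert x Bs \<subseteq> V" using Bs x unfolding V'_def by auto
      show "pairwise orthogonal (insert x Bs)"
        using Bs(2,3) unfolding V'_def by (auto simp: pairwise_insert orthogonal_commute)
      show "\<forall>v\<in>insert x Bs. norm v = 1 \<and> (\<exists>\<mu>. M *v v = \<mu> *\<^sub>R v)" using Bs(4) x by auto
      show "V \<subseteq> span (insert x Bs)"
      proof
        fix z assume z: "z \<in> V"
        have "z - (x \<bullet> z) *\<^sub>R x \<in> V'"
          unfolding V'_def orthogonal_def using z x Suc.prems(1)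
          by (auto simp: subspace_diff subspace_scale inner_diff_right norm_eq_1)
        then have a: "z - (x \<bullet> z) *\<^sub>R x \<in> span (insert x Bs)"
          using Bs(5) span_mono[of Bs "insert x Bs"] by auto
        have b: "(x \<bullet> z) *\<^sub>R x \<in> span (insert x Bs)"
          by (simp add: span_base span_mul)
        have "z = (z - (x \<bullet> z) *\<^sub>R x) + (x \<bullet> z) *\<^sub>R x" by simp
        then show "z \<in> span (insert x Bs)" using span_add[OF a b] by metis
      qed
    qed
  qed
qed

lemma spectral:
  fixes M :: "real^'n^'n"
  assumes sym: "transpose M = M"
  obtains Bs where "onb Bs" "\<And>v. v \<in> Bs \<Longrightarrow> M *v v = (v \<bullet> (M *v v)) *\<^sub>R v"
proof -
  from spectral_sub[OF sym, of UNIV "dim (UNIV::(real^'n) set)"]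
  obtain Bs where Bs: "finite Bs" "pairwise orthogonal Bs" "\<forall>v\<in>Bs. norm v = 1 \<and> (\<exists>\<mu>. M *v v = \<mu> *\<^sub>R v)"
    "UNIV \<subseteq> span Bs" by auto
  have "M *v v = (v \<bullet> (M *v v)) *\<^sub>R v" if v: "v \<in> Bs" for v
  proof -
    from Bs(3) v obtain \<mu> where m: "M *v v = \<mu> *\<^sub>R v" and n: "norm v = 1" by blast
    have "v \<bullet> (M *v v) = \<mu>" using m n by (simp add: norm_eq_1)
    then show ?thesis using m by simp
  qed
  moreover have "onb Bs" unfolding onb_def using Bs by auto
  ultimately show ?thesis using that by blast
qed

lemma onb_expand:
  assumes "onb Bs"
  shows "(\<Sum>v\<in>Bs. (x \<bullet> v) *\<^sub>R v) = x"
  using assms unfolding onb_def by (intro orthonormal_basis_expand) auto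

lemma onb_parseval:
  assumes "onb Bs"
  shows "x \<bullet> x = (\<Sum>v\<in>Bs. (x \<bullet> v)^2)"
proof -
  have "x \<bullet> x = x \<bullet> (\<Sum>v\<in>Bs. (x \<bullet> v) *\<^sub>R v)" using onb_expand[OF assms] by simp
  also have "\<dots> = (\<Sum>v\<in>Bs. (x \<bullet> v)^2)" by (simp add: inner_sum_right power2_eq_square)
  finally show ?thesis .
qed

lemma mv_sum: "(A::real^'n^'m) *v (\<Sum>v\<in>S. f v) = (\<Sum>v\<in>S. A *v f v)"
  by (simp add: vec_eq_iff matrix_vector_mult_def sum_component sum_distrib_left sum.swap[of _ UNIV S])

lemma sum_mv: "(\<Sum>v\<in>S. A v) *v (x::real^'n) = (\<Sum>v\<in>S. (A v :: real^'n^'m) *v x)"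
  by (simp add: vec_eq_iff matrix_vector_mult_def sum_component sum_distrib_right sum.swap[of _ UNIV S])

lemma onb_zero:
  fixes A :: "real^'n^'m"
  assumes "onb Bs" "\<And>v. v \<in> Bs \<Longrightarrow> A *v v = 0"
  shows "A = 0"
proof -
  have "A *v x = 0 *v x" for x
  proof -
    have "A *v x = A *v (\<Sum>v\<in>Bs. (x \<bullet> v) *\<^sub>R v)" using onb_expand[OF assms(1)] by simp
    also have "\<dots> = (\<Sum>v\<in>Bs. (x \<bullet> v) *\<^sub>R (A *v v))" by (simp add: mv_sum matrix_vector_mult_scaleR)
    also have "\<dots> = 0" using assms(2) by simp
    finally show ?thesis by simp
  qed
  then show ?thesis by (simp add: matrix_eq)
qed

lemma onb_orth:
  assumes "onb Bs" "u \<in> Bs" "v \<in> Bs"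
  shows "u \<bullet> v = (if u = v then 1 else 0)"
  using assms unfolding onb_def pairwise_def orthogonal_def by (auto simp: norm_eq_1)

lemma onb_sum_pick:
  assumes "onb Bs" "u \<in> Bs"
  shows "(\<Sum>v\<in>Bs. (c v * (v \<bullet> u)) *\<^sub>R v) = c u *\<^sub>R u"
proof -
  have "(\<Sum>v\<in>Bs. (c v * (v \<bullet> u)) *\<^sub>R v) = (\<Sum>v\<in>Bs. if v = u then c u *\<^sub>R u else 0)"
    using onb_orth[OF assms(1) _ assms(2)] by (intro sum.cong) auto
  also have "\<dots> = c u *\<^sub>R u" using assms unfolding onb_def by (simp add: sum.delta)
  finally show ?thesis .
qed

lemma transpose_diff: "transpose (A - B) = transpose A - transpose (B::real^'n^'m)"
  by (simp add: vec_eq_iff transpose_def)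

lemma psd_zero_form:
  fixes S :: "real^'n^'n"
  assumes "psd S" "x \<bullet> (S *v x) = 0"
  shows "S *v x = 0"
proof -
  have sym: "transpose S = S" and nn: "\<And>z. 0 \<le> z \<bullet> (S *v z)" using assms(1) unfolding psd_def by auto
  have "2*t*(-(y \<bullet> (S *v x))) + t^2*(-(y \<bullet> (S *v y))) \<le> 0" for y t
    using nn[of "x + t *\<^sub>R y"] unfolding quadform_expand[OF sym] assms(2) by simp
  then have "- ((S *v x) \<bullet> (S *v x)) = 0" by (rule quad_nonpos_zero)
  then show ?thesis by simp
qed

lemma psd_sqrt_unique:
  fixes S T :: "real^'n^'n"
  assumes S: "psd S" and T: "psd T" and eq: "S ** S = T ** T"
  shows "S = T"
proof -
  have sS: "transpose S = S" and nS: "\<And>z. 0 \<le> z \<bullet> (S *v z)" using S unfolding psd_def by auto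
  have sT: "transpose T = T" and nT: "\<And>z. 0 \<le> z \<bullet> (T *v z)" using T unfolding psd_def by auto
  define D where "D = S - T"
  have sD: "transpose D = D" unfolding D_def using sS sT by (simp add: transpose_diff)
  obtain Bs where Bs: "onb Bs" and eig: "\<And>v. v \<in> Bs \<Longrightarrow> D *v v = (v \<bullet> (D *v v)) *\<^sub>R v"
    using spectral[OF sD] by blast
  have "D *v w = 0" if w: "w \<in> Bs" for w
  proof -
    define \<delta> where "\<delta> = w \<bullet> (D *v w)"
    have Dw: "D *v w = \<delta> *\<^sub>R w" using eig[OF w] unfolding \<delta>_def .
    have SS: "S *v (S *v w) = T *v (T *v w)" using eq by (simp add: matrix_vector_mul_assoc)
    have "w \<bullet> (S *v (D *v w)) + (D *v w) \<bullet> (T *v w) = 0"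
    proof -
      have a: "w \<bullet> (S *v (S *v w)) = (S *v w) \<bullet> (S *v w)" using sym_dot[OF sS, of w "S *v w"] by simp
      have b: "w \<bullet> (S *v (T *v w)) = (S *v w) \<bullet> (T *v w)" using sym_dot[OF sS, of w "T *v w"] by simp
      have c: "w \<bullet> (T *v (T *v w)) = (T *v w) \<bullet> (T *v w)" using sym_dot[OF sT, of w "T *v w"] by simp
      have "w \<bullet> (S *v (D *v w)) + (D *v w) \<bullet> (T *v w)
          = w \<bullet> (S *v (S *v w)) - w \<bullet> (S *v (T *v w)) + (S *v w) \<bullet> (T *v w) - (T *v w) \<bullet> (T *v w)"
        unfolding D_def by (simp add: matrix_vector_mult_diff_rdistrib matrix_vector_mult_diff_distrib inner_diff_left inner_diff_right)
      also have "\<dots> = 0" using a b c SS by simp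
      finally show ?thesis .
    qed
    moreover have "w \<bullet> (S *v (D *v w)) + (D *v w) \<bullet> (T *v w) = \<delta> * (w \<bullet> (S *v w) + w \<bullet> (T *v w))"
      unfolding Dw by (simp add: matrix_vector_mult_scaleR algebra_simps)
    ultimately have z: "\<delta> * (w \<bullet> (S *v w) + w \<bullet> (T *v w)) = 0" by simp
    show ?thesis
    proof (cases "\<delta> = 0")
      case True then show ?thesis using Dw by simp
    next
      case False
      then have "w \<bullet> (S *v w) + w \<bullet> (T *v w) = 0" using z by simp
      then have "w \<bullet> (S *v w) = 0" "w \<bullet> (T *v w) = 0" using nS[of w] nT[of w] by linarith+
      then have "S *v w = 0" "T *v w = 0" using psd_zero_form S T by blast+
      then show ?thesis unfolding D_def by (simp add: matrix_vector_mult_diff_rdistrib)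
    qed
  qed
  then have "D = 0" by (rule onb_zero[OF Bs])
  then show ?thesis unfolding D_def by simp
qed

definition outer :: "real^'n \<Rightarrow> real^'n^'n" where
  "outer v = (\<chi> i j. v$i * v$j)"

lemma outer_mv: "outer v *v x = (v \<bullet> x) *\<^sub>R v"
  by (simp add: vec_eq_iff outer_def matrix_vector_mult_def inner_vec_def sum_distrib_left mult_ac)

lemma transpose_outer: "transpose (outer v) = outer v"
  by (simp add: vec_eq_iff outer_def transpose_def mult.commute)

lemma transpose_sum: "transpose (\<Sum>v\<in>S. A v) = (\<Sum>v\<in>S. transpose (A v :: real^'n^'m))"
  by (simp add: vec_eq_iff transpose_def sum_component)

lemma smult_mv: "(c *\<^sub>R (A::real^'n^'m)) *v x = c *\<^sub>R (A *v x)"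
  by (simp add: vec_eq_iff matrix_vector_mult_def sum_distrib_left mult_ac)

lemma psd_sqrt_exists:
  fixes M :: "real^'n^'n"
  assumes sym: "transpose M = M" and nn: "\<And>x. 0 \<le> x \<bullet> (M *v x)"
  shows "\<exists>S. psd S \<and> S ** S = M"
proof -
  obtain Bs where Bs: "onb Bs" and eig: "\<And>v. v \<in> Bs \<Longrightarrow> M *v v = (v \<bullet> (M *v v)) *\<^sub>R v"
    using spectral[OF sym] by blast
  define c where "c v = sqrt (v \<bullet> (M *v v))" for v
  define S where "S = (\<Sum>v\<in>Bs. c v *\<^sub>R outer v)"
  have Sx: "S *v x = (\<Sum>v\<in>Bs. (c v * (v \<bullet> x)) *\<^sub>R v)" for x
    unfolding S_def by (simp add: sum_mv smult_mv outer_mv)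
  have "transpose S = S" unfolding S_def by (simp add: transpose_sum transpose_scalar transpose_outer)
  moreover have "0 \<le> x \<bullet> (S *v x)" for x
  proof -
    have "x \<bullet> (S *v x) = (\<Sum>v\<in>Bs. c v * (v \<bullet> x)^2)"
      unfolding Sx by (simp add: inner_sum_right power2_eq_square inner_commute mult_ac)
    also have "\<dots> \<ge> 0" unfolding c_def using nn by (intro sum_nonneg mult_nonneg_nonneg) auto
    finally show ?thesis by simp
  qed
  ultimately have "psd S" unfolding psd_def by simp
  moreover have "S ** S = M"
  proof -
    have Su: "S *v u = c u *\<^sub>R u" if u: "u \<in> Bs" for u
      unfolding Sx using onb_sum_pick[OF Bs u, of c] by simp
    have "(S ** S - M) *v u = 0" if u: "u \<in> Bs" for u
    proof -
      have "(S ** S - M) *v u = S *v (S *v u) - M *v u"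
        by (simp add: matrix_vector_mult_diff_rdistrib matrix_vector_mul_assoc)
      also have "\<dots> = (c u * c u) *\<^sub>R u - (u \<bullet> (M *v u)) *\<^sub>R u"
        using Su[OF u] eig[OF u] by (simp add: matrix_vector_mult_scaleR)
      also have "c u * c u = u \<bullet> (M *v u)" unfolding c_def using nn[of u] by simp
      finally show ?thesis by simp
    qed
    then have "S ** S - M = 0" by (rule onb_zero[OF Bs])
    then show ?thesis by simp
  qed
  ultimately show ?thesis by blast
qed

lemma psd_sqrt_props:
  fixes M :: "real^'n^'n"
  assumes "transpose M = M" "\<And>x. 0 \<le> x \<bullet> (M *v x)"
  shows "psd (psd_sqrt M) \<and> psd_sqrt M ** psd_sqrt M = M"
proof -
  obtain S where S: "psd S" "S ** S = M" using psd_sqrt_exists[OF assms] by blast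
  have "psd_sqrt M = S" unfolding psd_sqrt_def
  proof (rule the_equality)
    show "psd S \<and> S ** S = M" using S by simp
    show "\<And>T. psd T \<and> T ** T = M \<Longrightarrow> T = S" using S psd_sqrt_unique by metis
  qed
  then show ?thesis using S by simp
qed

lemma sum_UNIV_Plus: "(\<Sum>c\<in>(UNIV::('a::finite + 'b::finite) set). g c) = (\<Sum>i\<in>UNIV. g (Inl i)) + (\<Sum>i\<in>UNIV. g (Inr i))"
proof -
  have "(\<Sum>c\<in>(UNIV::('a + 'b) set). g c) = (\<Sum>c\<in>(UNIV <+> UNIV). g c)" by simp
  also have "\<dots> = (\<Sum>i\<in>UNIV. g (Inl i)) + (\<Sum>i\<in>UNIV. g (Inr i))"
    by (subst sum.Plus) (auto simp: comp_def)
  finally show ?thesis .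
qed

lemma lap_mv: "(laplacian b *v x) $ i = (\<Sum>j\<in>UNIV. b i j * (x$i - x$j))"
proof -
  have "(laplacian b *v x) $ i = (\<Sum>j\<in>UNIV. (if i = j then (\<Sum>k\<in>UNIV - {i}. b i k) else - b i j) * x$j)"
    by (simp add: laplacian_def matrix_vector_mult_def)
  also have "\<dots> = (\<Sum>k\<in>UNIV - {i}. b i k) * x$i + (\<Sum>j\<in>UNIV - {i}. - b i j * x$j)"
    by (subst sum.remove[of UNIV i]) (auto intro!: sum.cong)
  also have "\<dots> = (\<Sum>j\<in>UNIV - {i}. b i j * (x$i - x$j))"
    by (simp add: sum_distrib_right sum_distrib_left sum.distrib[symmetric] algebra_simps sum_negf)
  also have "\<dots> = (\<Sum>j\<in>UNIV. b i j * (x$i - x$j))"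
    using sum.remove[of UNIV i "\<lambda>j. b i j * (x$i - x$j)"] by simp
  finally show ?thesis .
qed

lemma lap_sym:
  assumes "\<forall>i j. b i j = b j i"
  shows "transpose (laplacian b) = laplacian b"
  using assms by (auto simp: vec_eq_iff transpose_def laplacian_def)

lemma lap_psd:
  fixes b :: "'n::finite \<Rightarrow> 'n \<Rightarrow> real"
  assumes sym: "\<forall>i j. b i j = b j i" and nn: "\<forall>i j. 0 \<le> b i j"
  shows "0 \<le> x \<bullet> (laplacian b *v x)"
proof -
  have q: "x \<bullet> (laplacian b *v x) = (\<Sum>i\<in>UNIV. \<Sum>j\<in>UNIV. b i j * (x$i * (x$i - x$j)))"
    by (simp add: inner_vec_def lap_mv sum_distrib_left mult_ac)
  have q2: "x \<bullet> (laplacian b *v x) = (\<Sum>i\<in>UNIV. \<Sum>j\<in>UNIV. b i j * (x$j * (x$j - x$i)))"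
    unfolding q using sym by (subst sum.swap) simp
  have "2 * (x \<bullet> (laplacian b *v x)) = (\<Sum>i\<in>UNIV. \<Sum>j\<in>UNIV. b i j * (x$i - x$j)^2)"
    unfolding mult_2 apply (subst (1) q, subst q2)
    by (simp add: sum.distrib[symmetric] power2_eq_square algebra_simps)
  also have "\<dots> \<ge> 0" using nn by (intro sum_nonneg mult_nonneg_nonneg) auto
  finally show ?thesis by simp
qed

lemma path_edge:
  assumes "(i, j) \<in> {(x, y). b x y > (0::real)}\<^sup>*" "i \<noteq> j"
  shows "\<exists>x y. x \<noteq> y \<and> b x y > 0"
  using assms
proof (induction rule: rtrancl_induct)
  case base then show ?case by simp
next
  case (step y z)
  show ?case
  proof (cases "y = z")
    case True then show ?thesis using step by simp
  next
    case False then show ?thesis using step by blast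
  qed
qed

lemma lap_nonzero:
  fixes b :: "'n::finite \<Rightarrow> 'n \<Rightarrow> real"
  assumes "CARD('n) \<ge> 2" "connected_weights b"
  shows "laplacian b \<noteq> 0"
proof -
  obtain i j :: 'n where ij: "i \<noteq> j"
  proof -
    have "\<not> (\<forall>i j :: 'n. i = j)"
    proof
      assume "\<forall>i j :: 'n. i = j"
      then have e: "(UNIV :: 'n set) = {undefined}" by auto
      have "CARD('n) = 1" unfolding e by simp
      then show False using assms(1) by simp
    qed
    then show ?thesis using that by blast
  qed
  then obtain x y where xy: "x \<noteq> y" "b x y > 0"
    using path_edge[of i j b] assms(2) unfolding connected_weights_def by blast
  then have "laplacian b $ x $ y \<noteq> 0" by (simp add: laplacian_def)
  then show ?thesis by auto
qed

lemma trace_MMT: "trace (M ** transpose M) = (\<Sum>i\<in>UNIV. (M$i) \<bullet> (M$i))" for M :: "real^'n^'m"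
  by (simp add: trace_def matrix_matrix_mult_def transpose_def inner_vec_def)

lemma h2_integrand:
  fixes A :: "real^'s^'s" and B :: "real^'n^'s" and C :: "real^'s^'y"
  assumes Bs: "onb Bs"
  shows "trace (C ** mexp (t *\<^sub>R A) ** B ** transpose B ** mexp (t *\<^sub>R transpose A) ** transpose C)
    = (\<Sum>v\<in>Bs. (C *v (mexp (t *\<^sub>R A) *v (B *v v))) \<bullet> (C *v (mexp (t *\<^sub>R A) *v (B *v v))))"
proof -
  define M where "M = C ** mexp (t *\<^sub>R A) ** B"
  have "C ** mexp (t *\<^sub>R A) ** B ** transpose B ** mexp (t *\<^sub>R transpose A) ** transpose C
      = M ** transpose M"
    unfolding M_def mexp_transpose by (simp add: matrix_transpose_mul matrix_mul_assoc)
  then have "trace (C ** mexp (t *\<^sub>R A) ** B ** transpose B ** mexp (t *\<^sub>R transpose A) ** transpose C)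
      = (\<Sum>i\<in>UNIV. (M$i) \<bullet> (M$i))" by (simp add: trace_MMT)
  also have "\<dots> = (\<Sum>i\<in>UNIV. \<Sum>v\<in>Bs. ((M$i) \<bullet> v)^2)" by (simp add: onb_parseval[OF Bs])
  also have "\<dots> = (\<Sum>v\<in>Bs. \<Sum>i\<in>UNIV. ((M *v v)$i)^2)"
    by (subst sum.swap) (simp add: matrix_vector_mul_component)
  also have "\<dots> = (\<Sum>v\<in>Bs. (M *v v) \<bullet> (M *v v))" by (simp add: inner_vec_def power2_eq_square)
  also have "\<dots> = (\<Sum>v\<in>Bs. (C *v (mexp (t *\<^sub>R A) *v (B *v v))) \<bullet> (C *v (mexp (t *\<^sub>R A) *v (B *v v))))"
    unfolding M_def by (simp add: matrix_vector_mul_assoc matrix_mul_assoc)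
  finally show ?thesis .
qed

lemma sum3_cases:
  assumes "\<And>i. P (Inl (Inl i))" "\<And>i. P (Inl (Inr i))" "\<And>i. P (Inr i)"
  shows "P r"
proof (cases r)
  case (Inl a) then show ?thesis using assms by (cases a) auto
next
  case (Inr b) then show ?thesis using assms by auto
qed

definition mk3 :: "real^'n \<Rightarrow> real^'n \<Rightarrow> real^'n \<Rightarrow> real^(('n+'n)+'n)" where
  "mk3 a b c = (\<chi> r. case r of Inl (Inl i) \<Rightarrow> a$i | Inl (Inr i) \<Rightarrow> b$i | Inr i \<Rightarrow> c$i)"
definition th3 :: "real^(('n+'n)+'n) \<Rightarrow> real^'n" where "th3 z = (\<chi> i. z $ Inl (Inl i))"
definition om3 :: "real^(('n+'n)+'n) \<Rightarrow> real^'n" where "om3 z = (\<chi> i. z $ Inl (Inr i))"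
definition Om3 :: "real^(('n+'n)+'n) \<Rightarrow> real^'n" where "Om3 z = (\<chi> i. z $ Inr i)"

lemma mk3_sel[simp]: "th3 (mk3 a b c) = a" "om3 (mk3 a b c) = b" "Om3 (mk3 a b c) = c"
  by (simp_all add: mk3_def th3_def om3_def Om3_def vec_eq_iff)

lemma mk3_eq[simp]: "mk3 a b c = mk3 a' b' c' \<longleftrightarrow> a = a' \<and> b = b' \<and> c = c'"
  by (metis mk3_sel)

lemma mk3_sel_eq: "mk3 (th3 z) (om3 z) (Om3 z) = z"
proof -
  have "mk3 (th3 z) (om3 z) (Om3 z) $ r = z $ r" for r
    by (rule sum3_cases[of _ r]) (simp_all add: mk3_def th3_def om3_def Om3_def)
  then show ?thesis by (simp add: vec_eq_iff)
qed

lemma sum3: "(\<Sum>c\<in>(UNIV::(('n::finite+'n)+'n) set). g c) = (\<Sum>i\<in>UNIV. g (Inl (Inl i))) + (\<Sum>i\<in>UNIV. g (Inl (Inr i))) + (\<Sum>i\<in>UNIV. g (Inr i))"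
  by (simp add: sum_UNIV_Plus)

lemma blk3_mv: "blk3 F *v z = mk3 (F 0 0 *v th3 z + F 0 1 *v om3 z + F 0 2 *v Om3 z)
   (F 1 0 *v th3 z + F 1 1 *v om3 z + F 1 2 *v Om3 z) (F 2 0 *v th3 z + F 2 1 *v om3 z + F 2 2 *v Om3 z)"
proof -
  have "(blk3 F *v z) $ r = mk3 (F 0 0 *v th3 z + F 0 1 *v om3 z + F 0 2 *v Om3 z)
   (F 1 0 *v th3 z + F 1 1 *v om3 z + F 1 2 *v Om3 z) (F 2 0 *v th3 z + F 2 1 *v om3 z + F 2 2 *v Om3 z) $ r" for r
    by (rule sum3_cases[of _ r]) (simp_all add: matrix_vector_mult_def blk3_def sum3 mk3_def th3_def om3_def Om3_def)
  then show ?thesis by (simp add: vec_eq_iff)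
qed

lemma blkcol3_mv: "blkcol3 F *v v = mk3 (F 0 *v v) (F 1 *v v) (F 2 *v v)"
proof -
  have "(blkcol3 F *v v) $ r = mk3 (F 0 *v v) (F 1 *v v) (F 2 *v v) $ r" for r
    by (rule sum3_cases[of _ r]) (simp_all add: matrix_vector_mult_def blkcol3_def mk3_def)
  then show ?thesis by (simp add: vec_eq_iff)
qed

lemma blkrow3_mv: "blkrow3 F *v z = F 0 *v th3 z + F 1 *v om3 z + F 2 *v Om3 z"
  by (simp add: vec_eq_iff matrix_vector_mult_def blkrow3_def sum3 th3_def om3_def Om3_def)

lemma neg_mv: "(- A) *v x = - (A *v (x::real^'n))" for A :: "real^'n^'m"
  by (simp add: vec_eq_iff matrix_vector_mult_def sum_negf)

lemma A_dapi_mv: "A_dapi m \<tau> k LB LC *v z = mk3 (om3 z)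
   (- ((m/\<tau>) *\<^sub>R (LB *v th3 z)) - (1/\<tau>) *\<^sub>R om3 z + (1/\<tau>) *\<^sub>R Om3 z)
   (- ((1/k) *\<^sub>R om3 z) - (1/k) *\<^sub>R (LC *v Om3 z))"
  unfolding A_dapi_def blk3_mv by (simp add: neg_mv smult_mv)

lemma B_dapi_mv: "B_dapi \<tau> *v v = mk3 0 ((1/\<tau>) *\<^sub>R v) 0"
  unfolding B_dapi_def blkcol3_mv by (simp add: smult_mv)

lemma C_dapi_mv: "C_dapi LG *v z = psd_sqrt LG *v th3 z"
  unfolding C_dapi_def blkrow3_mv by simp

definition Pv3 :: "real^'n \<Rightarrow> real^(('n+'n)+'n)^(('n+'n)+'n)" where
  "Pv3 v = blk3 (\<lambda>p q. if p = q then outer v else 0)"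

lemma Pv3_mv: "Pv3 v *v z = mk3 ((v \<bullet> th3 z) *\<^sub>R v) ((v \<bullet> om3 z) *\<^sub>R v) ((v \<bullet> Om3 z) *\<^sub>R v)"
  unfolding Pv3_def blk3_mv by (simp add: outer_mv)

lemma eig_dot:
  fixes L :: "real^'n^'n"
  assumes "transpose L = L" "L *v v = lam *\<^sub>R v"
  shows "v \<bullet> (L *v x) = lam * (v \<bullet> x)"
  using sym_dot[OF assms(1), of v x] assms(2) by simp

lemma Pv3_commute:
  fixes L :: "real^'n^'n"
  assumes sym: "transpose L = L" and ev: "L *v v = lam *\<^sub>R v"
  shows "Pv3 v ** A_dapi m \<tau> k L (\<gamma> *\<^sub>R L) = A_dapi m \<tau> k L (\<gamma> *\<^sub>R L) ** Pv3 v"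
proof -
  have "Pv3 v *v (A_dapi m \<tau> k L (\<gamma> *\<^sub>R L) *v z) = A_dapi m \<tau> k L (\<gamma> *\<^sub>R L) *v (Pv3 v *v z)" for z
    unfolding Pv3_mv A_dapi_mv
    by (simp add: eig_dot[OF sym ev] smult_mv matrix_vector_mult_scaleR ev inner_diff_right inner_add_right algebra_simps)
  then show ?thesis by (simp add: matrix_eq matrix_vector_mul_assoc[symmetric])
qed

definition mk2 :: "real^'n \<Rightarrow> real^'n \<Rightarrow> real^('n+'n)" where
  "mk2 a b = (\<chi> r. case r of Inl i \<Rightarrow> a$i | Inr i \<Rightarrow> b$i)"
definition th2 :: "real^('n+'n) \<Rightarrow> real^'n" where "th2 z = (\<chi> i. z $ Inl i)"
definition om2 :: "real^('n+'n) \<Rightarrow> real^'n" where "om2 z = (\<chi> i. z $ Inr i)"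

lemma mk2_sel[simp]: "th2 (mk2 a b) = a" "om2 (mk2 a b) = b"
  by (simp_all add: mk2_def th2_def om2_def vec_eq_iff)

lemma mk2_eq[simp]: "mk2 a b = mk2 a' b' \<longleftrightarrow> a = a' \<and> b = b'"
  by (metis mk2_sel)

lemma sum2: "(\<Sum>c\<in>(UNIV::('n::finite+'n) set). g c) = (\<Sum>i\<in>UNIV. g (Inl i)) + (\<Sum>i\<in>UNIV. g (Inr i))"
  by (simp add: sum_UNIV_Plus)

lemma sum2_cases:
  assumes "\<And>i. P (Inl i)" "\<And>i. P (Inr i)"
  shows "P r"
  using assms by (cases r) auto

lemma blk2_mv: "blk2 F *v z = mk2 (F 0 0 *v th2 z + F 0 1 *v om2 z) (F 1 0 *v th2 z + F 1 1 *v om2 z)"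
proof -
  have "(blk2 F *v z) $ r = mk2 (F 0 0 *v th2 z + F 0 1 *v om2 z) (F 1 0 *v th2 z + F 1 1 *v om2 z) $ r" for r
    by (rule sum2_cases[of _ r]) (simp_all add: matrix_vector_mult_def blk2_def sum2 mk2_def th2_def om2_def)
  then show ?thesis by (simp add: vec_eq_iff)
qed

lemma blkcol2_mv: "blkcol2 F *v v = mk2 (F 0 *v v) (F 1 *v v)"
proof -
  have "(blkcol2 F *v v) $ r = mk2 (F 0 *v v) (F 1 *v v) $ r" for r
    by (rule sum2_cases[of _ r]) (simp_all add: matrix_vector_mult_def blkcol2_def mk2_def)
  then show ?thesis by (simp add: vec_eq_iff)
qed

lemma blkrow2_mv: "blkrow2 F *v z = F 0 *v th2 z + F 1 *v om2 z"
  by (simp add: vec_eq_iff matrix_vector_mult_def blkrow2_def sum2 th2_def om2_def)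

lemma A_std_mv: "A_std m \<tau> LB *v z = mk2 (om2 z)
   (- ((m/\<tau>) *\<^sub>R (LB *v th2 z)) - (1/\<tau>) *\<^sub>R om2 z)"
  unfolding A_std_def blk2_mv by (simp add: neg_mv smult_mv)

lemma B_std_mv: "B_std \<tau> *v v = mk2 0 ((1/\<tau>) *\<^sub>R v)"
  unfolding B_std_def blkcol2_mv by (simp add: smult_mv)

lemma C_std_mv: "C_std LG *v z = psd_sqrt LG *v th2 z"
  unfolding C_std_def blkrow2_mv by simp

definition Pv2 :: "real^'n \<Rightarrow> real^('n+'n)^('n+'n)" where
  "Pv2 v = blk2 (\<lambda>p q. if p = q then outer v else 0)"

lemma Pv2_mv: "Pv2 v *v z = mk2 ((v \<bullet> th2 z) *\<^sub>R v) ((v \<bullet> om2 z) *\<^sub>R v)"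
  unfolding Pv2_def blk2_mv by (simp add: outer_mv)

lemma Pv2_commute:
  fixes L :: "real^'n^'n" and m \<tau> k \<gamma> lam :: real
  assumes sym: "transpose L = L" and ev: "L *v v = lam *\<^sub>R v"
  shows "Pv2 v ** A_std m \<tau> L = A_std m \<tau> L ** Pv2 v"
proof -
  have "Pv2 v *v (A_std m \<tau> L *v z) = A_std m \<tau> L *v (Pv2 v *v z)" for z
    unfolding Pv2_mv A_std_mv
    by (simp add: eig_dot[OF sym ev] smult_mv matrix_vector_mult_scaleR ev inner_diff_right inner_add_right algebra_simps)
  then show ?thesis by (simp add: matrix_eq matrix_vector_mul_assoc[symmetric])
qed

lemma deriv_dot_block:
  assumes "\<And>r. ((\<lambda>t. Z t $ r) has_real_derivative Z' $ r) (at t)"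
  shows "((\<lambda>t. v \<bullet> (\<chi> i. Z t $ f i)) has_real_derivative v \<bullet> (\<chi> i. Z' $ f i)) (at t)"
  unfolding inner_vec_def by (simp, intro DERIV_sum DERIV_cmult assms)

lemma dapi_mode:
  fixes L :: "real^'n^'n" and m \<tau> k \<gamma> lam :: real
  assumes sym: "transpose L = L" and ev: "L *v v = lam *\<^sub>R v" and nv: "norm v = 1"
  defines "Z \<equiv> \<lambda>t. mexp (t *\<^sub>R A_dapi m \<tau> k L (\<gamma> *\<^sub>R L)) *v (B_dapi \<tau> *v v)"
  shows "Z t = mk3 ((v \<bullet> th3 (Z t)) *\<^sub>R v) ((v \<bullet> om3 (Z t)) *\<^sub>R v) ((v \<bullet> Om3 (Z t)) *\<^sub>R v)"
    and "((\<lambda>t. v \<bullet> th3 (Z t)) has_real_derivative (v \<bullet> om3 (Z t))) (at t)"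
    and "((\<lambda>t. v \<bullet> om3 (Z t)) has_real_derivative
          (- (m/\<tau>) * lam * (v \<bullet> th3 (Z t)) - (1/\<tau>) * (v \<bullet> om3 (Z t)) + (1/\<tau>) * (v \<bullet> Om3 (Z t)))) (at t)"
    and "((\<lambda>t. v \<bullet> Om3 (Z t)) has_real_derivative
          (- (1/k) * (v \<bullet> om3 (Z t)) - (\<gamma>/k) * lam * (v \<bullet> Om3 (Z t)))) (at t)"
    and "v \<bullet> th3 (Z 0) = 0" "v \<bullet> om3 (Z 0) = 1/\<tau>" "v \<bullet> Om3 (Z 0) = 0"
proof -
  define A where "A = A_dapi m \<tau> k L (\<gamma> *\<^sub>R L)"
  define y0 where "y0 = B_dapi \<tau> *v v"
  have vv: "v \<bullet> v = 1" using nv by (simp add: norm_eq_1)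
  have Py: "Pv3 v *v y0 = y0" unfolding y0_def Pv3_mv B_dapi_mv using vv by simp
  have com: "Pv3 v ** mexp (t *\<^sub>R A) = mexp (t *\<^sub>R A) ** Pv3 v"
    unfolding A_def by (rule mexp_commute[OF Pv3_commute[OF sym ev]])
  have "Z t = mexp (t *\<^sub>R A) *v (Pv3 v *v y0)" unfolding Z_def A_def y0_def Py[unfolded y0_def] ..
  also have "\<dots> = Pv3 v *v Z t" unfolding Z_def A_def[symmetric] y0_def[symmetric]
    by (simp add: matrix_vector_mul_assoc com)
  finally show "Z t = mk3 ((v \<bullet> th3 (Z t)) *\<^sub>R v) ((v \<bullet> om3 (Z t)) *\<^sub>R v) ((v \<bullet> Om3 (Z t)) *\<^sub>R v)"
    unfolding Pv3_mv .
  have d: "((\<lambda>t. Z t $ r) has_real_derivative (A *v Z t) $ r) (at t)" for r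
    unfolding Z_def A_def by (rule mexp_vec_deriv)
  have AZ: "A *v Z t = mk3 (om3 (Z t))
     (- ((m/\<tau>) *\<^sub>R (L *v th3 (Z t))) - (1/\<tau>) *\<^sub>R om3 (Z t) + (1/\<tau>) *\<^sub>R Om3 (Z t))
     (- ((1/k) *\<^sub>R om3 (Z t)) - (1/k) *\<^sub>R ((\<gamma> *\<^sub>R L) *v Om3 (Z t)))"
    unfolding A_def by (rule A_dapi_mv)
  have d1: "((\<lambda>t. v \<bullet> th3 (Z t)) has_real_derivative v \<bullet> th3 (A *v Z t)) (at t)"
    unfolding th3_def by (rule deriv_dot_block[OF d])
  then show "((\<lambda>t. v \<bullet> th3 (Z t)) has_real_derivative (v \<bullet> om3 (Z t))) (at t)"
    unfolding AZ by simp
  have d2: "((\<lambda>t. v \<bullet> om3 (Z t)) has_real_derivative v \<bullet> om3 (A *v Z t)) (at t)"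
    unfolding om3_def by (rule deriv_dot_block[OF d])
  then show "((\<lambda>t. v \<bullet> om3 (Z t)) has_real_derivative
          (- (m/\<tau>) * lam * (v \<bullet> th3 (Z t)) - (1/\<tau>) * (v \<bullet> om3 (Z t)) + (1/\<tau>) * (v \<bullet> Om3 (Z t)))) (at t)"
    unfolding AZ by (simp add: eig_dot[OF sym ev] inner_diff_right inner_add_right mult.assoc)
  have d3: "((\<lambda>t. v \<bullet> Om3 (Z t)) has_real_derivative v \<bullet> Om3 (A *v Z t)) (at t)"
    unfolding Om3_def by (rule deriv_dot_block[OF d])
  then show "((\<lambda>t. v \<bullet> Om3 (Z t)) has_real_derivative
          (- (1/k) * (v \<bullet> om3 (Z t)) - (\<gamma>/k) * lam * (v \<bullet> Om3 (Z t)))) (at t)"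
    unfolding AZ by (simp add: eig_dot[OF sym ev] inner_diff_right inner_add_right smult_mv mult.assoc)
  have Z0: "Z 0 = mk3 0 ((1/\<tau>) *\<^sub>R v) 0" unfolding Z_def mexp_zero_scale by (simp add: B_dapi_mv)
  show "v \<bullet> th3 (Z 0) = 0" "v \<bullet> om3 (Z 0) = 1/\<tau>" "v \<bullet> Om3 (Z 0) = 0" unfolding Z0 using vv by simp_all
qed

lemma std_mode:
  fixes L :: "real^'n^'n" and m \<tau> k \<gamma> lam :: real
  assumes sym: "transpose L = L" and ev: "L *v v = lam *\<^sub>R v" and nv: "norm v = 1"
  defines "Z \<equiv> \<lambda>t. mexp (t *\<^sub>R A_std m \<tau> L) *v (B_std \<tau> *v v)"
  shows "Z t = mk2 ((v \<bullet> th2 (Z t)) *\<^sub>R v) ((v \<bullet> om2 (Z t)) *\<^sub>R v)"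
    and "((\<lambda>t. v \<bullet> th2 (Z t)) has_real_derivative (v \<bullet> om2 (Z t))) (at t)"
    and "((\<lambda>t. v \<bullet> om2 (Z t)) has_real_derivative
          (- (m/\<tau>) * lam * (v \<bullet> th2 (Z t)) - (1/\<tau>) * (v \<bullet> om2 (Z t)))) (at t)"
    and "v \<bullet> th2 (Z 0) = 0" "v \<bullet> om2 (Z 0) = 1/\<tau>"
proof -
  define A where "A = A_std m \<tau> L"
  define y0 where "y0 = B_std \<tau> *v v"
  have vv: "v \<bullet> v = 1" using nv by (simp add: norm_eq_1)
  have Py: "Pv2 v *v y0 = y0" unfolding y0_def Pv2_mv B_std_mv using vv by simp
  have com: "Pv2 v ** mexp (t *\<^sub>R A) = mexp (t *\<^sub>R A) ** Pv2 v"
    unfolding A_def by (rule mexp_commute[OF Pv2_commute[OF sym ev]])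
  have "Z t = mexp (t *\<^sub>R A) *v (Pv2 v *v y0)" unfolding Z_def A_def y0_def Py[unfolded y0_def] ..
  also have "\<dots> = Pv2 v *v Z t" unfolding Z_def A_def[symmetric] y0_def[symmetric]
    by (simp add: matrix_vector_mul_assoc com)
  finally show "Z t = mk2 ((v \<bullet> th2 (Z t)) *\<^sub>R v) ((v \<bullet> om2 (Z t)) *\<^sub>R v)"
    unfolding Pv2_mv .
  have d: "((\<lambda>t. Z t $ r) has_real_derivative (A *v Z t) $ r) (at t)" for r
    unfolding Z_def A_def by (rule mexp_vec_deriv)
  have AZ: "A *v Z t = mk2 (om2 (Z t))
     (- ((m/\<tau>) *\<^sub>R (L *v th2 (Z t))) - (1/\<tau>) *\<^sub>R om2 (Z t))"
    unfolding A_def by (rule A_std_mv)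
  have d1: "((\<lambda>t. v \<bullet> th2 (Z t)) has_real_derivative v \<bullet> th2 (A *v Z t)) (at t)"
    unfolding th2_def by (rule deriv_dot_block[OF d])
  then show "((\<lambda>t. v \<bullet> th2 (Z t)) has_real_derivative (v \<bullet> om2 (Z t))) (at t)"
    unfolding AZ by simp
  have d2: "((\<lambda>t. v \<bullet> om2 (Z t)) has_real_derivative v \<bullet> om2 (A *v Z t)) (at t)"
    unfolding om2_def by (rule deriv_dot_block[OF d])
  then show "((\<lambda>t. v \<bullet> om2 (Z t)) has_real_derivative
          (- (m/\<tau>) * lam * (v \<bullet> th2 (Z t)) - (1/\<tau>) * (v \<bullet> om2 (Z t)))) (at t)"
    unfolding AZ by (simp add: eig_dot[OF sym ev] inner_diff_right inner_add_right mult.assoc)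
  have Z0: "Z 0 = mk2 0 ((1/\<tau>) *\<^sub>R v)" unfolding Z_def mexp_zero_scale by (simp add: B_std_mv)
  show "v \<bullet> th2 (Z 0) = 0" "v \<bullet> om2 (Z 0) = 1/\<tau>" unfolding Z0 using vv by simp_all
qed

lemma decay:
  fixes V V' :: "real \<Rightarrow> real"
  assumes d: "\<And>t. (V has_real_derivative V' t) (at t)"
    and le: "\<And>t. V' t \<le> - \<epsilon> * V t" and e: "\<epsilon> > 0" and nn: "\<And>t. 0 \<le> V t"
  shows "(V \<longlongrightarrow> 0) at_top"
proof -
  define h where "h t = exp (\<epsilon> * t) * V t" for t
  have hd: "(h has_real_derivative exp (\<epsilon> * t) * (\<epsilon> * V t + V' t)) (at t)" for t
    unfolding h_def by (auto intro!: derivative_eq_intros d simp: algebra_simps)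
  have "h t \<le> h 0" if "0 \<le> t" for t
  proof (rule DERIV_nonpos_imp_nonincreasing[OF that])
    fix x assume "0 \<le> x" "x \<le> t"
    have "exp (\<epsilon> * x) * (\<epsilon> * V x + V' x) \<le> 0"
      using le[of x] by (intro mult_nonneg_nonpos) auto
    then show "\<exists>y. DERIV h x :> y \<and> y \<le> 0" using hd by blast
  qed
  have bnd: "V t \<le> V 0 * exp (- (\<epsilon> * t))" if t0: "0 \<le> t" for t
  proof -
    have "exp (\<epsilon> * t) * V t \<le> V 0" using \<open>\<And>t. 0 \<le> t \<Longrightarrow> h t \<le> h 0\<close>[OF t0] unfolding h_def by simp
    then have "V t \<le> V 0 / exp (\<epsilon> * t)" by (simp add: le_divide_eq mult.commute)
    then show ?thesis by (simp add: exp_minus divide_inverse)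
  qed
  have lim: "((\<lambda>t. V 0 * exp (- (\<epsilon> * t))) \<longlongrightarrow> 0) at_top"
    using e by real_asymp
  show ?thesis
  proof (rule tendsto_sandwich[OF _ _ tendsto_const lim])
    show "\<forall>\<^sub>F t in at_top. 0 \<le> V t" using nn by simp
    show "\<forall>\<^sub>F t in at_top. V t \<le> V 0 * exp (- (\<epsilon> * t))"
      using eventually_ge_at_top[of "0::real"] by (rule eventually_mono) (rule bnd)
  qed
qed

lemma decay2:
  fixes V V' N :: "real \<Rightarrow> real"
  assumes d: "\<And>t. (V has_real_derivative V' t) (at t)"
    and le: "\<And>t. V' t \<le> - m * N t" and le2: "\<And>t. V t \<le> K * N t"
    and m: "m > 0" and K: "K > 0" and nn: "\<And>t. 0 \<le> V t"
  shows "(V \<longlongrightarrow> 0) at_top"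
proof (rule decay[OF d _ _ nn])
  show "m / K > 0" using m K by simp
  fix t
  have "V t / K \<le> N t" using le2[of t] K by (simp add: divide_le_eq mult.commute)
  then have "m * (V t / K) \<le> m * N t" by (rule mult_left_mono) (use m in auto)
  then show "V' t \<le> - (m / K) * V t" using le[of t] by simp
qed

lemma std_scalar:
  fixes x1 x2 :: "real \<Rightarrow> real" and a c q :: real
  assumes a: "a > 0" and c: "c > 0" and q: "q \<ge> 0"
    and d1: "\<And>t. (x1 has_real_derivative x2 t) (at t)"
    and d2: "\<And>t. (x2 has_real_derivative (- a * x1 t - c * x2 t)) (at t)"
  shows "((\<lambda>t. q/(2*a*c) * (a * (x1 t)^2 + (c * x1 t + x2 t)^2)) has_real_derivative (- q * (x1 t)^2)) (at t)"
    and "((\<lambda>t. q/(2*a*c) * (a * (x1 t)^2 + (c * x1 t + x2 t)^2)) \<longlongrightarrow> 0) at_top"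
proof -
  show "((\<lambda>t. q/(2*a*c) * (a * (x1 t)^2 + (c * x1 t + x2 t)^2)) has_real_derivative (- q * (x1 t)^2)) (at t)"
    for t
  proof -
    define k0 where "k0 = q/(2*a*c)"
    have "((\<lambda>t. k0 * (a * (x1 t)^2 + (c * x1 t + x2 t)^2)) has_real_derivative
       k0 * (a * (2 * x1 t * x2 t) + 2 * (c * x1 t + x2 t) * (c * x2 t + (- a * x1 t - c * x2 t)))) (at t)"
      by (auto intro!: derivative_eq_intros d1 d2 simp: power2_eq_square algebra_simps)
    moreover have "k0 * (a * (2 * x1 t * x2 t) + 2 * (c * x1 t + x2 t) * (c * x2 t + (- a * x1 t - c * x2 t)))
        = - q * (x1 t)^2"
    proof -
      have "a * (2 * x1 t * x2 t) + 2 * (c * x1 t + x2 t) * (c * x2 t + (- a * x1 t - c * x2 t)) = -2*a*c*(x1 t)^2"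
        by (simp add: algebra_simps power2_eq_square)
      then show ?thesis using a c unfolding k0_def by simp
    qed
    ultimately show ?thesis unfolding k0_def by simp
  qed
  define V where "V t = a * (x1 t)^2 + (c * x1 t + x2 t)^2 + a * (x1 t)^2 + (x2 t)^2" for t
  define N where "N t = (x1 t)^2 + (x2 t)^2" for t
  define mn where "mn = min a 1"
  have mn: "0 < mn" "mn \<le> a" "mn \<le> 1" using a unfolding mn_def by auto
  have Vd: "(V has_real_derivative (- 2*a*c*(x1 t)^2 - 2*c*(x2 t)^2)) (at t)" for t
  proof -
    have "(V has_real_derivative a * (2 * x1 t * x2 t) + 2 * (c * x1 t + x2 t) * (c * x2 t + (- a * x1 t - c * x2 t))
          + a * (2 * x1 t * x2 t) + 2 * x2 t * (- a * x1 t - c * x2 t)) (at t)"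
      unfolding V_def[abs_def] by (auto intro!: derivative_eq_intros d1 d2 simp: power2_eq_square algebra_simps)
    moreover have "a * (2 * x1 t * x2 t) + 2 * (c * x1 t + x2 t) * (c * x2 t + (- a * x1 t - c * x2 t))
          + a * (2 * x1 t * x2 t) + 2 * x2 t * (- a * x1 t - c * x2 t) = - 2*a*c*(x1 t)^2 - 2*c*(x2 t)^2"
      by (simp add: algebra_simps power2_eq_square)
    ultimately show ?thesis by simp
  qed
  have VN: "- 2*a*c*(x1 t)^2 - 2*c*(x2 t)^2 \<le> - (2*c*mn) * N t" for t
  proof -
    have X: "0 \<le> (x1 t)^2" "0 \<le> (x2 t)^2" by simp_all
    have "c * mn * (x1 t)^2 \<le> c * a * (x1 t)^2" using mn c X by (intro mult_right_mono mult_left_mono) auto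
    moreover have "c * mn * (x2 t)^2 \<le> c * 1 * (x2 t)^2" using mn c X by (intro mult_right_mono mult_left_mono) auto
    ultimately show ?thesis unfolding N_def by (simp add: algebra_simps)
  qed
  have VK: "V t \<le> (2*a + 2*c^2 + 3) * N t" for t
  proof -
    have P: "(c * x1 t + x2 t)^2 \<le> 2 * c^2 * (x1 t)^2 + 2 * (x2 t)^2"
    proof -
      have "0 \<le> (c * x1 t - x2 t)^2" by simp
      then show ?thesis by (simp add: power2_eq_square algebra_simps)
    qed
    define X where "X = (x1 t)^2"
    define Y where "Y = (x2 t)^2"
    define PP where "PP = (c * x1 t + x2 t)^2"
    define Q where "Q = c^2"
    have X: "0 \<le> X" "0 \<le> Y" "0 \<le> Q" unfolding X_def Y_def Q_def by simp_all
    have e1: "V t = 2*a*X + PP + Y" unfolding V_def X_def Y_def PP_def by simp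
    have e2: "(2*a + 2*c^2 + 3) * N t = 2*a*X + 2*Q*X + 3*X + 2*a*Y + 2*Q*Y + 3*Y"
      unfolding N_def X_def Y_def Q_def by (simp add: algebra_simps)
    have P': "PP \<le> 2*Q*X + 2*Y" using P unfolding PP_def Q_def X_def Y_def by simp
    have "0 \<le> a*Y" "0 \<le> Q*X" "0 \<le> Q*Y" using a X by simp_all
    then show ?thesis unfolding e1 e2 using P' X by linarith
  qed
  have Vnn: "0 \<le> V t" for t unfolding V_def using a by simp
  have Vlim: "(V \<longlongrightarrow> 0) at_top"
    by (rule decay2[OF Vd VN VK _ _ Vnn]) (use c mn a in \<open>simp_all add: add_pos_nonneg\<close>)
  show "((\<lambda>t. q/(2*a*c) * (a * (x1 t)^2 + (c * x1 t + x2 t)^2)) \<longlongrightarrow> 0) at_top"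
  proof (rule tendsto_sandwich[OF _ _ tendsto_const])
    show "\<forall>\<^sub>F t in at_top. 0 \<le> q/(2*a*c) * (a * (x1 t)^2 + (c * x1 t + x2 t)^2)"
      using a c q by (intro always_eventually allI mult_nonneg_nonneg) auto
    show "\<forall>\<^sub>F t in at_top. q/(2*a*c) * (a * (x1 t)^2 + (c * x1 t + x2 t)^2) \<le> q/(2*a*c) * V t"
      using a c q unfolding V_def by (intro always_eventually allI mult_left_mono) auto
    show "((\<lambda>t. q/(2*a*c) * V t) \<longlongrightarrow> 0) at_top" by (rule tendsto_mult_right_zero[OF Vlim])
  qed
qed

lemma sq3_le: "(u1 + u2 + u3)^2 \<le> 3 * (u1^2 + u2^2 + (u3::real)^2)"
proof -
  have "0 \<le> (u1 - u2)^2 + (u2 - u3)^2 + (u1 - u3)^2" by simp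
  then show ?thesis by (simp add: power2_eq_square algebra_simps)
qed

lemma sq2_le: "(u1 + u2)^2 \<le> 2 * (u1^2 + (u2::real)^2)"
proof -
  have "0 \<le> (u1 - u2)^2" by simp
  then show ?thesis by (simp add: power2_eq_square algebra_simps)
qed

lemma dapi_scalar:
  fixes x1 x2 x3 :: "real \<Rightarrow> real" and a c e f q :: real
  assumes a: "a > 0" and c: "c > 0" and e: "e > 0" and f: "f > 0" and q: "q \<ge> 0"
    and d1: "\<And>t. (x1 has_real_derivative x2 t) (at t)"
    and d2: "\<And>t. (x2 has_real_derivative (- a * x1 t - c * x2 t + c * x3 t)) (at t)"
    and d3: "\<And>t. (x3 has_real_derivative (- e * x2 t - f * x3 t)) (at t)"
  defines "ww \<equiv> c + f"
  defines "D \<equiv> a + ww * (e + f)"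
  defines "g \<equiv> c * ww * (e + f) - a * f"
  defines "R \<equiv> \<lambda>t. (ww*c*x3 t + ww*f*x2 t + g*x1 t)^2 + a*f*ww*(x2 t + ww*x1 t)^2 + a*c*f*D*(x1 t)^2"
  shows "((\<lambda>t. q/(2*a*D*f*c*ww) * R t) has_real_derivative (- q * (x1 t)^2)) (at t)"
    and "((\<lambda>t. q/(2*a*D*f*c*ww) * R t) \<longlongrightarrow> 0) at_top"
proof -
  have s0: "ww > 0" unfolding ww_def using c f by simp
  have D0: "D > 0" unfolding D_def using a s0 e f by (simp add: add_pos_pos)
  have Rd: "(R has_real_derivative (- 2*a*D*f*c*ww*(x1 t)^2)) (at t)" for t
  proof -
    have "(R has_real_derivative
        2 * (ww*c*x3 t + ww*f*x2 t + g*x1 t) * (ww*c*(- e * x2 t - f * x3 t) + ww*f*(- a * x1 t - c * x2 t + c * x3 t) + g*x2 t)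
      + a*f*ww*(2 * (x2 t + ww*x1 t) * ((- a * x1 t - c * x2 t + c * x3 t) + ww * x2 t))
      + a*c*f*D*(2 * x1 t * x2 t)) (at t)"
      unfolding R_def by (auto intro!: derivative_eq_intros d1 d2 d3 simp: power2_eq_square algebra_simps)
    moreover have "2 * (ww*c*x3 t + ww*f*x2 t + g*x1 t) * (ww*c*(- e * x2 t - f * x3 t) + ww*f*(- a * x1 t - c * x2 t + c * x3 t) + g*x2 t)
      + a*f*ww*(2 * (x2 t + ww*x1 t) * ((- a * x1 t - c * x2 t + c * x3 t) + ww * x2 t))
      + a*c*f*D*(2 * x1 t * x2 t) = - 2*a*D*f*c*ww*(x1 t)^2"
      unfolding g_def D_def ww_def by (simp add: algebra_simps power2_eq_square)
    ultimately show ?thesis by simp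
  qed
  show "((\<lambda>t. q/(2*a*D*f*c*ww) * R t) has_real_derivative (- q * (x1 t)^2)) (at t)" for t
  proof -
    have "((\<lambda>t. q/(2*a*D*f*c*ww) * R t) has_real_derivative q/(2*a*D*f*c*ww) * (- 2*a*D*f*c*ww*(x1 t)^2)) (at t)"
      by (rule DERIV_cmult[OF Rd])
    moreover have "q/(2*a*D*f*c*ww) * (- 2*a*D*f*c*ww*(x1 t)^2) = - q * (x1 t)^2"
      using a D0 f c s0 by simp
    ultimately show ?thesis by simp
  qed
  define E where "E t = e*a*(x1 t)^2 + e*(x2 t)^2 + c*(x3 t)^2" for t
  have Ed: "(E has_real_derivative (- 2*e*c*(x2 t)^2 - 2*c*f*(x3 t)^2)) (at t)" for t
  proof -
    have "(E has_real_derivative e*a*(2*x1 t*x2 t) + e*(2*x2 t*(- a * x1 t - c * x2 t + c * x3 t))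
         + c*(2*x3 t*(- e * x2 t - f * x3 t))) (at t)"
      unfolding E_def[abs_def] by (auto intro!: derivative_eq_intros d1 d2 d3 simp: power2_eq_square algebra_simps)
    moreover have "e*a*(2*x1 t*x2 t) + e*(2*x2 t*(- a * x1 t - c * x2 t + c * x3 t))
         + c*(2*x3 t*(- e * x2 t - f * x3 t)) = - 2*e*c*(x2 t)^2 - 2*c*f*(x3 t)^2"
      by (simp add: algebra_simps power2_eq_square)
    ultimately show ?thesis by simp
  qed
  define V where "V t = R t + E t" for t
  define N where "N t = (x1 t)^2 + (x2 t)^2 + (x3 t)^2" for t
  define m where "m = min (2*a*D*f*c*ww) (min (2*e*c) (2*c*f))"
  define cX where "cX = 3*g^2 + 2*(a*f*ww*ww^2) + a*c*f*D + e*a"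
  define cY where "cY = 3*(ww*f)^2 + 2*(a*f*ww) + e"
  define cZ where "cZ = 3*(ww*c)^2 + c"
  have pos: "0 < a*D*f*c*ww" "0 < e*c" "0 < c*f" "0 < a*f*ww" "0 < a*c*f*D" "0 < e*a"
    using a D0 f c s0 e by simp_all
  have m0: "m > 0" unfolding m_def using a D0 f c s0 e by (auto intro!: mult_pos_pos)
  have cpos: "0 \<le> cX" "0 \<le> cY" "0 < cZ"
  proof -
    have h: "0 \<le> (ww*f)^2" "0 \<le> (ww*c)^2" "0 \<le> g^2" by simp_all
    have h2: "0 \<le> a*f*ww*ww^2" by (rule mult_nonneg_nonneg) (use pos(4) in auto)
    show "0 \<le> cX" unfolding cX_def using h h2 pos by linarith
    show "0 \<le> cY" unfolding cY_def using h pos e by linarith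
    show "0 < cZ" unfolding cZ_def using h c by linarith
  qed
  have Vd: "(V has_real_derivative ((- 2*a*D*f*c*ww*(x1 t)^2) + (- 2*e*c*(x2 t)^2 - 2*c*f*(x3 t)^2))) (at t)" for t
    unfolding V_def[abs_def] by (rule DERIV_add[OF Rd Ed])
  have VN: "(- 2*a*D*f*c*ww*(x1 t)^2) + (- 2*e*c*(x2 t)^2 - 2*c*f*(x3 t)^2) \<le> - m * N t" for t
  proof -
    have "m * (x1 t)^2 \<le> (2*a*D*f*c*ww) * (x1 t)^2" unfolding m_def by (intro mult_right_mono) auto
    moreover have "m * (x2 t)^2 \<le> (2*e*c) * (x2 t)^2" unfolding m_def by (intro mult_right_mono) auto
    moreover have "m * (x3 t)^2 \<le> (2*c*f) * (x3 t)^2" unfolding m_def by (intro mult_right_mono) auto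
    ultimately show ?thesis unfolding N_def by (simp add: algebra_simps)
  qed
  have VK: "V t \<le> (cX + cY + cZ) * N t" for t
  proof -
    define X where "X = (x1 t)^2"
    define Y where "Y = (x2 t)^2"
    define Z where "Z = (x3 t)^2"
    have XYZ: "0 \<le> X" "0 \<le> Y" "0 \<le> Z" unfolding X_def Y_def Z_def by simp_all
    have b1: "(ww*c*x3 t + ww*f*x2 t + g*x1 t)^2 \<le> 3*(ww*c)^2*Z + 3*(ww*f)^2*Y + 3*g^2*X"
      using sq3_le[of "ww*c*x3 t" "ww*f*x2 t" "g*x1 t"] unfolding X_def Y_def Z_def
      by (simp add: power_mult_distrib algebra_simps)
    have b2: "(x2 t + ww*x1 t)^2 \<le> 2*Y + 2*ww^2*X"
      using sq2_le[of "x2 t" "ww*x1 t"] unfolding X_def Y_def by (simp add: power_mult_distrib algebra_simps)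
    have b2': "a*f*ww*(x2 t + ww*x1 t)^2 \<le> a*f*ww*(2*Y + 2*ww^2*X)"
      using b2 pos by (intro mult_left_mono) auto
    have eV: "V t = (ww*c*x3 t + ww*f*x2 t + g*x1 t)^2 + a*f*ww*(x2 t + ww*x1 t)^2 + a*c*f*D*X + e*a*X + e*Y + c*Z"
      unfolding V_def R_def E_def X_def Y_def Z_def by simp
    have "V t \<le> cX*X + cY*Y + cZ*Z"
      unfolding eV cX_def cY_def cZ_def using b1 b2' by (simp add: algebra_simps)
    moreover have "0 \<le> cX*Y" "0 \<le> cX*Z" "0 \<le> cY*X" "0 \<le> cY*Z" "0 \<le> cZ*X" "0 \<le> cZ*Y"
      using cpos XYZ by simp_all
    moreover have "(cX + cY + cZ) * N t = cX*X + cX*Y + cX*Z + cY*X + cY*Y + cY*Z + cZ*X + cZ*Y + cZ*Z"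
      unfolding N_def X_def Y_def Z_def by (simp add: algebra_simps)
    ultimately show ?thesis by linarith
  qed
  have Rnn: "0 \<le> R t" for t unfolding R_def using a f s0 c D0 by (intro add_nonneg_nonneg mult_nonneg_nonneg) auto
  have Enn: "0 \<le> E t" for t unfolding E_def using e a c by (intro add_nonneg_nonneg mult_nonneg_nonneg) auto
  have Vnn: "0 \<le> V t" for t unfolding V_def using Rnn Enn by (simp add: add_nonneg_nonneg)
  have Vlim: "(V \<longlongrightarrow> 0) at_top"
    by (rule decay2[OF Vd VN VK m0 _ Vnn]) (use cpos in linarith)
  have k0: "0 \<le> q/(2*a*D*f*c*ww)" using q a D0 f c s0 by (intro divide_nonneg_pos mult_pos_pos) auto
  show "((\<lambda>t. q/(2*a*D*f*c*ww) * R t) \<longlongrightarrow> 0) at_top"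
  proof (rule tendsto_sandwich[OF _ _ tendsto_const])
    show "\<forall>\<^sub>F t in at_top. 0 \<le> q/(2*a*D*f*c*ww) * R t"
      using k0 Rnn by (intro always_eventually allI mult_nonneg_nonneg) auto
    show "\<forall>\<^sub>F t in at_top. q/(2*a*D*f*c*ww) * R t \<le> q/(2*a*D*f*c*ww) * V t"
      using k0 Enn unfolding V_def by (intro always_eventually allI mult_left_mono) auto
    show "((\<lambda>t. q/(2*a*D*f*c*ww) * V t) \<longlongrightarrow> 0) at_top" by (rule tendsto_mult_right_zero[OF Vlim])
  qed
qed

lemma h2_ftc:
  fixes P :: "'v set" and q :: "'v \<Rightarrow> real" and xx x' W :: "'v \<Rightarrow> real \<Rightarrow> real"
  assumes fin: "finite P"
    and dx: "\<And>v t. v \<in> P \<Longrightarrow> (xx v has_real_derivative x' v t) (at t)"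
    and dW: "\<And>v t. v \<in> P \<Longrightarrow> (W v has_real_derivative (- (q v * (xx v t)^2))) (at t)"
    and lW: "\<And>v. v \<in> P \<Longrightarrow> (W v \<longlongrightarrow> 0) at_top"
    and q: "\<And>v. v \<in> P \<Longrightarrow> 0 \<le> q v"
  shows "set_lebesgue_integral lborel {0..} (\<lambda>t. (\<Sum>v\<in>P. q v * (xx v t)^2)) = (\<Sum>v\<in>P. W v 0)"
proof -
  define f where "f t = (\<Sum>v\<in>P. q v * (xx v t)^2)" for t
  define F where "F t = - (\<Sum>v\<in>P. W v t)" for t
  have dF: "(F has_real_derivative f t) (at t)" for t
  proof -
    have "((\<lambda>t. \<Sum>v\<in>P. W v t) has_real_derivative (\<Sum>v\<in>P. - (q v * (xx v t)^2))) (at t)"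
      by (rule DERIV_sum) (rule dW)
    then have "(F has_real_derivative - (\<Sum>v\<in>P. - (q v * (xx v t)^2))) (at t)"
      unfolding F_def by (rule DERIV_minus)
    then show ?thesis unfolding f_def by (simp add: sum_negf)
  qed
  have cx: "continuous (at t) (xx v)" if "v \<in> P" for v t
    using DERIV_isCont[OF dx[OF that]] .
  have cf: "isCont f t" for t
    unfolding f_def by (intro continuous_intros cx) auto
  have fnn: "0 \<le> f t" for t unfolding f_def using q by (intro sum_nonneg mult_nonneg_nonneg) auto
  have cF: "isCont F t" for t using DERIV_isCont[OF dF] .
  have A: "((F \<circ> real_of_ereal) \<longlongrightarrow> F 0) (at_right (ereal 0))"
    unfolding ereal_tendsto_simps1
    using cF[of 0] by (simp add: isCont_def tendsto_mono[OF at_within_le_at])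
  have B: "((F \<circ> real_of_ereal) \<longlongrightarrow> 0) (at_left \<infinity>)"
    unfolding ereal_tendsto_simps1
  proof -
    have "((\<lambda>t. \<Sum>v\<in>P. W v t) \<longlongrightarrow> (\<Sum>v\<in>P. 0)) at_top"
      by (rule tendsto_sum) (rule lW)
    then have "((\<lambda>t. - (\<Sum>v\<in>P. W v t)) \<longlongrightarrow> - 0) at_top" by (intro tendsto_minus) simp
    then show "(F \<longlongrightarrow> 0) at_top" unfolding F_def by simp
  qed
  have ftc: "interval_lebesgue_integral lborel (ereal 0) \<infinity> f = 0 - F 0"
    by (rule interval_integral_FTC_nonneg(2)[where a="ereal 0" and b=\<infinity>, OF _ dF cf _ A B])
       (auto simp: fnn)
  have ae: "AE t in lborel. ((t::real) \<in> {0..}) = (t \<in> {0<..})"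
    using AE_lborel_singleton[of "0::real"] by (auto elim!: AE_mp)
  have "interval_lebesgue_integral lborel (ereal 0) \<infinity> f = set_lebesgue_integral lborel {0<..} f"
    using interval_lebesgue_integral_0_infty(2)[of lborel f] by (simp add: zero_ereal_def)
  also have "\<dots> = set_lebesgue_integral lborel {0..} f"
  proof (rule set_integral_cong_set)
    have cont: "continuous_on UNIV f" using cf by (simp add: continuous_on_eq_continuous_at)
    show "set_borel_measurable lborel {0..} f" unfolding set_borel_measurable_def
      using borel_measurable_continuous_on_indicator[of "{0..}" f] cont
      by (auto intro: continuous_on_subset)
    show "set_borel_measurable lborel {0<..} f" unfolding set_borel_measurable_def
      using borel_measurable_continuous_on_indicator[of "{0<..}" f] cont
      by (auto intro: continuous_on_subset)
    show "AE t in lborel. ((t::real) \<in> {0..}) = (t \<in> {0<..})"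
      by (rule ae)
  qed
  finally show ?thesis using ftc unfolding f_def F_def by simp
qed

lemma deriv_eqI: "(f has_real_derivative y) F \<Longrightarrow> y = z \<Longrightarrow> (f has_real_derivative z) F"
  by simp

lemma std_scalar_ex:
  fixes x1 x2 :: "real \<Rightarrow> real" and a c q :: real
  assumes a: "a > 0" and c: "c > 0" and q: "q \<ge> 0"
    and d1: "\<And>t. (x1 has_real_derivative x2 t) (at t)"
    and d2: "\<And>t. (x2 has_real_derivative (- a * x1 t - c * x2 t)) (at t)"
    and i1: "x1 0 = 0" and i2: "x2 0 = c"
  shows "\<exists>W. (\<forall>t. (W has_real_derivative (- (q * (x1 t)^2))) (at t)) \<and> (W \<longlongrightarrow> 0) at_top
     \<and> W 0 = q * c / (2 * a)"
proof (intro exI conjI allI)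
  let ?W = "\<lambda>t. q/(2*a*c) * (a * (x1 t)^2 + (c * x1 t + x2 t)^2)"
  show "(?W has_real_derivative (- (q * (x1 t)^2))) (at t)" for t
    by (rule deriv_eqI[OF std_scalar(1)[OF a c q d1 d2]]) simp
  show "(?W \<longlongrightarrow> 0) at_top" by (rule std_scalar(2)[OF a c q d1 d2])
  show "?W 0 = q * c / (2 * a)" using a c unfolding i1 i2 by (simp add: power2_eq_square)
qed

lemma aux_field:
  fixes a D f c w q X :: real
  assumes "a \<noteq> 0" "D \<noteq> 0" "f \<noteq> 0" "c \<noteq> 0" "w \<noteq> 0"
  shows "q/(2*a*D*f*c*w) * (w*f*c^2*X) = (q*c/(2*a)) * (X/D)"
  using assms by (simp add: field_simps power2_eq_square)

lemma dapi_scalar_ex: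
  fixes x1 x2 x3 :: "real \<Rightarrow> real" and a c e f q :: real
  assumes a: "a > 0" and c: "c > 0" and e: "e > 0" and f: "f > 0" and q: "q \<ge> 0"
    and d1: "\<And>t. (x1 has_real_derivative x2 t) (at t)"
    and d2: "\<And>t. (x2 has_real_derivative (- a * x1 t - c * x2 t + c * x3 t)) (at t)"
    and d3: "\<And>t. (x3 has_real_derivative (- e * x2 t - f * x3 t)) (at t)"
    and i1: "x1 0 = 0" and i2: "x2 0 = c" and i3: "x3 0 = 0"
  shows "\<exists>W. (\<forall>t. (W has_real_derivative (- (q * (x1 t)^2))) (at t)) \<and> (W \<longlongrightarrow> 0) at_top
     \<and> W 0 = (q * c / (2 * a)) * (((c+f)*f + a) / (a + (c+f)*(e+f)))"
proof (intro exI conjI allI)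
  let ?s = "c + f"
  let ?D = "a + ?s * (e + f)"
  let ?g = "c * ?s * (e + f) - a * f"
  let ?W = "\<lambda>t. q/(2*a*?D*f*c*?s) * ((?s*c*x3 t + ?s*f*x2 t + ?g*x1 t)^2 + a*f*?s*(x2 t + ?s*x1 t)^2 + a*c*f*?D*(x1 t)^2)"
  show "(?W has_real_derivative (- (q * (x1 t)^2))) (at t)" for t
    by (rule deriv_eqI[OF dapi_scalar(1)[OF a c e f q d1 d2 d3]]) simp
  show "(?W \<longlongrightarrow> 0) at_top" by (rule dapi_scalar(2)[OF a c e f q d1 d2 d3])
  have s0: "?s > 0" using c f by simp
  have D0: "?D > 0" using a s0 e f by (simp add: add_pos_pos)
  have "?W 0 = q/(2*a*?D*f*c*?s) * ((?s*f*c)^2 + a*f*?s*c^2)" unfolding i1 i2 i3 by (simp add: mult_ac)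
  also have "\<dots> = q/(2*a*?D*f*c*?s) * (?s*f*c^2 * (?s*f + a))"
    by (simp add: power2_eq_square algebra_simps)
  also have "\<dots> = (q * c / (2 * a)) * ((?s*f + a) / ?D)"
    using aux_field[of a ?D f c ?s q "?s*f + a"] a c f s0 D0 by simp
  finally show "?W 0 = (q * c / (2 * a)) * (((c+f)*f + a) / (a + (c+f)*(e+f)))" .
qed

theorem mainTheorem2:
  fixes b :: "'n::finite \<Rightarrow> 'n \<Rightarrow> real"
    and \<alpha> m k \<tau> \<gamma> :: real
  assumes "CARD('n) \<ge> 2"
    and "\<forall>i j. b i j = b j i"
    and "\<forall>i j. 0 \<le> b i j"
    and "connected_weights b"
    and "\<alpha> > 0" and "m > 0" and "k > 0" and "\<tau> > 0" and "\<gamma> > 0"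
  shows "h2sq (A_dapi m \<tau> k (laplacian b) (\<gamma> *\<^sub>R laplacian b)) (B_dapi \<tau>)
             (C_dapi (\<alpha> *\<^sub>R laplacian b))
         < h2sq (A_std m \<tau> (laplacian b)) (B_std \<tau>) (C_std (\<alpha> *\<^sub>R laplacian b))"
proof -
  note al = \<open>\<alpha> > 0\<close> and mp = \<open>m > 0\<close> and kp = \<open>k > 0\<close> and tp = \<open>\<tau> > 0\<close> and gp = \<open>\<gamma> > 0\<close>
  define L where "L = laplacian b"
  have symL: "transpose L = L" unfolding L_def using assms(2) by (rule lap_sym)
  have psdL: "0 \<le> x \<bullet> (L *v x)" for x unfolding L_def using assms(2,3) by (rule lap_psd)
  have L0: "L \<noteq> 0" unfolding L_def using assms(1,4) by (rule lap_nonzero)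
  define LG where "LG = \<alpha> *\<^sub>R L"
  have symLG: "transpose LG = LG" unfolding LG_def by (simp add: transpose_scalar symL)
  have psdLG: "0 \<le> x \<bullet> (LG *v x)" for x unfolding LG_def smult_mv using psdL[of x] al by simp
  define S where "S = psd_sqrt LG"
  have S: "psd S" "S ** S = LG" using psd_sqrt_props[OF symLG psdLG] unfolding S_def by auto
  have symS: "transpose S = S" using S(1) unfolding psd_def by simp
  obtain Bs where Bs: "onb Bs" and eig0: "\<And>v. v \<in> Bs \<Longrightarrow> L *v v = (v \<bullet> (L *v v)) *\<^sub>R v"
    using spectral[OF symL] by blast
  define lam where "lam v = v \<bullet> (L *v v)" for v
  have eig: "v \<in> Bs \<Longrightarrow> L *v v = lam v *\<^sub>R v" for v using eig0 unfolding lam_def .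
  have lam0: "0 \<le> lam v" for v unfolding lam_def by (rule psdL)
  have nv: "v \<in> Bs \<Longrightarrow> norm v = 1" for v using Bs unfolding onb_def by auto
  have finBs: "finite Bs" using Bs unfolding onb_def by auto
  define Bp where "Bp = {v \<in> Bs. lam v > 0}"
  have finBp: "finite Bp" using finBs unfolding Bp_def by simp
  have BpBs: "Bp \<subseteq> Bs" unfolding Bp_def by auto
  have lamz: "v \<in> Bs - Bp \<Longrightarrow> lam v = 0" for v using lam0[of v] unfolding Bp_def by auto
  have Bp_ne: "Bp \<noteq> {}"
  proof
    assume "Bp = {}"
    then have "L *v v = 0" if "v \<in> Bs" for v using that eig[OF that] lamz[of v] by simp
    then have "L = 0" by (rule onb_zero[OF Bs])
    with L0 show False by simp
  qed
  have Sv: "(S *v v) \<bullet> (S *v v) = \<alpha> * lam v" for v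
  proof -
    have "(S *v v) \<bullet> (S *v v) = v \<bullet> (S *v (S *v v))" using sym_dot[OF symS, of v "S *v v"] by simp
    also have "\<dots> = v \<bullet> (LG *v v)" using S(2) by (simp add: matrix_vector_mul_assoc)
    also have "\<dots> = \<alpha> * lam v" unfolding LG_def lam_def by (simp add: smult_mv)
    finally show ?thesis .
  qed

  define xD where "xD v t = v \<bullet> th3 (mexp (t *\<^sub>R A_dapi m \<tau> k L (\<gamma> *\<^sub>R L)) *v (B_dapi \<tau> *v v))" for v t
  define yD where "yD v t = v \<bullet> om3 (mexp (t *\<^sub>R A_dapi m \<tau> k L (\<gamma> *\<^sub>R L)) *v (B_dapi \<tau> *v v))" for v t
  define zD where "zD v t = v \<bullet> Om3 (mexp (t *\<^sub>R A_dapi m \<tau> k L (\<gamma> *\<^sub>R L)) *v (B_dapi \<tau> *v v))" for v t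
  note dm = dapi_mode[OF symL eig nv, where m=m and \<tau>=\<tau> and k=k and \<gamma>=\<gamma>, folded xD_def yD_def zD_def]
  have intD: "trace (C_dapi LG ** mexp (t *\<^sub>R A_dapi m \<tau> k L (\<gamma> *\<^sub>R L)) ** B_dapi \<tau> ** transpose (B_dapi \<tau>)
      ** mexp (t *\<^sub>R transpose (A_dapi m \<tau> k L (\<gamma> *\<^sub>R L))) ** transpose (C_dapi LG))
      = (\<Sum>v\<in>Bp. (\<alpha> * lam v) * (xD v t)^2)" for t
  proof -
    have "trace (C_dapi LG ** mexp (t *\<^sub>R A_dapi m \<tau> k L (\<gamma> *\<^sub>R L)) ** B_dapi \<tau> ** transpose (B_dapi \<tau>)
      ** mexp (t *\<^sub>R transpose (A_dapi m \<tau> k L (\<gamma> *\<^sub>R L))) ** transpose (C_dapi LG))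
      = (\<Sum>v\<in>Bs. (C_dapi LG *v (mexp (t *\<^sub>R A_dapi m \<tau> k L (\<gamma> *\<^sub>R L)) *v (B_dapi \<tau> *v v)))
               \<bullet> (C_dapi LG *v (mexp (t *\<^sub>R A_dapi m \<tau> k L (\<gamma> *\<^sub>R L)) *v (B_dapi \<tau> *v v))))"
      by (rule h2_integrand[OF Bs])
    also have "\<dots> = (\<Sum>v\<in>Bs. (\<alpha> * lam v) * (xD v t)^2)"
    proof (rule sum.cong[OF refl])
      fix v assume v: "v \<in> Bs"
      have Z: "mexp (t *\<^sub>R A_dapi m \<tau> k L (\<gamma> *\<^sub>R L)) *v (B_dapi \<tau> *v v)
          = mk3 (xD v t *\<^sub>R v) (yD v t *\<^sub>R v) (zD v t *\<^sub>R v)"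
        using dm(1)[OF v v, of t] .
      have "C_dapi LG *v (mexp (t *\<^sub>R A_dapi m \<tau> k L (\<gamma> *\<^sub>R L)) *v (B_dapi \<tau> *v v)) = xD v t *\<^sub>R (S *v v)"
        unfolding Z C_dapi_mv S_def by (simp add: matrix_vector_mult_scaleR)
      then show "(C_dapi LG *v (mexp (t *\<^sub>R A_dapi m \<tau> k L (\<gamma> *\<^sub>R L)) *v (B_dapi \<tau> *v v)))
               \<bullet> (C_dapi LG *v (mexp (t *\<^sub>R A_dapi m \<tau> k L (\<gamma> *\<^sub>R L)) *v (B_dapi \<tau> *v v)))
             = (\<alpha> * lam v) * (xD v t)^2"
        using Sv[of v] by (simp add: power2_eq_square mult_ac)
    qed
    also have "\<dots> = (\<Sum>v\<in>Bp. (\<alpha> * lam v) * (xD v t)^2)"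
      by (rule sum.mono_neutral_right[OF finBs BpBs]) (simp add: lamz)
    finally show ?thesis .
  qed
  have hD: "h2sq (A_dapi m \<tau> k (laplacian b) (\<gamma> *\<^sub>R laplacian b)) (B_dapi \<tau>) (C_dapi (\<alpha> *\<^sub>R laplacian b))
      = set_lebesgue_integral lborel {0..} (\<lambda>t. \<Sum>v\<in>Bp. (\<alpha> * lam v) * (xD v t)^2)"
    unfolding h2sq_def L_def[symmetric] LG_def[symmetric] intD ..
  have exD: "\<exists>W. (\<forall>t. (W has_real_derivative (- ((\<alpha> * lam v) * (xD v t)^2))) (at t)) \<and> (W \<longlongrightarrow> 0) at_top
     \<and> W 0 = ((\<alpha> * lam v) * (1/\<tau>) / (2 * (m/\<tau> * lam v))) *
        (((1/\<tau> + \<gamma>/k * lam v)*(\<gamma>/k * lam v) + m/\<tau> * lam v) / (m/\<tau> * lam v + (1/\<tau> + \<gamma>/k * lam v)*(1/k + \<gamma>/k * lam v)))"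
    if v: "v \<in> Bp" for v
  proof -
    have vB: "v \<in> Bs" and lp: "lam v > 0" using v unfolding Bp_def by auto
    show ?thesis
    proof (rule dapi_scalar_ex)
      show "m/\<tau> * lam v > 0" "1/\<tau> > 0" "1/k > 0" "\<gamma>/k * lam v > 0" "0 \<le> \<alpha> * lam v"
        using mp tp kp gp al lp by simp_all
      show "(xD v has_real_derivative yD v t) (at t)" for t using dm(2)[OF vB vB] .
      show "(yD v has_real_derivative (- (m/\<tau> * lam v) * xD v t - 1/\<tau> * yD v t + 1/\<tau> * zD v t)) (at t)" for t
        by (rule deriv_eqI[OF dm(3)[OF vB vB]]) simp
      show "(zD v has_real_derivative (- (1/k) * yD v t - \<gamma>/k * lam v * zD v t)) (at t)" for t
        by (rule deriv_eqI[OF dm(4)[OF vB vB]]) simp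
      show "xD v 0 = 0" "yD v 0 = 1/\<tau>" "zD v 0 = 0" using dm(5-7)[OF vB vB] by simp_all
    qed
  qed
  then obtain WD where WD: "\<And>v. v \<in> Bp \<Longrightarrow> (\<forall>t. (WD v has_real_derivative (- ((\<alpha> * lam v) * (xD v t)^2))) (at t))
      \<and> (WD v \<longlongrightarrow> 0) at_top
      \<and> WD v 0 = ((\<alpha> * lam v) * (1/\<tau>) / (2 * (m/\<tau> * lam v))) *
        (((1/\<tau> + \<gamma>/k * lam v)*(\<gamma>/k * lam v) + m/\<tau> * lam v) / (m/\<tau> * lam v + (1/\<tau> + \<gamma>/k * lam v)*(1/k + \<gamma>/k * lam v)))"
    by metis
  have valD: "set_lebesgue_integral lborel {0..} (\<lambda>t. \<Sum>v\<in>Bp. (\<alpha> * lam v) * (xD v t)^2) = (\<Sum>v\<in>Bp. WD v 0)"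
  proof (rule h2_ftc[OF finBp])
    show "\<And>v t. v \<in> Bp \<Longrightarrow> (xD v has_real_derivative yD v t) (at t)" using dm(2) BpBs by blast
    show "\<And>v t. v \<in> Bp \<Longrightarrow> (WD v has_real_derivative - (\<alpha> * lam v * (xD v t)\<^sup>2)) (at t)" using WD by blast
    show "\<And>v. v \<in> Bp \<Longrightarrow> (WD v \<longlongrightarrow> 0) at_top" using WD by blast
    show "\<And>v. v \<in> Bp \<Longrightarrow> 0 \<le> \<alpha> * lam v" using al lam0 by simp
  qed

  define xS where "xS v t = v \<bullet> th2 (mexp (t *\<^sub>R A_std m \<tau> L) *v (B_std \<tau> *v v))" for v t
  define yS where "yS v t = v \<bullet> om2 (mexp (t *\<^sub>R A_std m \<tau> L) *v (B_std \<tau> *v v))" for v t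
  note sm = std_mode[OF symL eig nv, where m=m and \<tau>=\<tau>, folded xS_def yS_def]
  have intS: "trace (C_std LG ** mexp (t *\<^sub>R A_std m \<tau> L) ** B_std \<tau> ** transpose (B_std \<tau>)
      ** mexp (t *\<^sub>R transpose (A_std m \<tau> L)) ** transpose (C_std LG))
      = (\<Sum>v\<in>Bp. (\<alpha> * lam v) * (xS v t)^2)" for t
  proof -
    have "trace (C_std LG ** mexp (t *\<^sub>R A_std m \<tau> L) ** B_std \<tau> ** transpose (B_std \<tau>)
      ** mexp (t *\<^sub>R transpose (A_std m \<tau> L)) ** transpose (C_std LG))
      = (\<Sum>v\<in>Bs. (C_std LG *v (mexp (t *\<^sub>R A_std m \<tau> L) *v (B_std \<tau> *v v)))
               \<bullet> (C_std LG *v (mexp (t *\<^sub>R A_std m \<tau> L) *v (B_std \<tau> *v v))))"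
      by (rule h2_integrand[OF Bs])
    also have "\<dots> = (\<Sum>v\<in>Bs. (\<alpha> * lam v) * (xS v t)^2)"
    proof (rule sum.cong[OF refl])
      fix v assume v: "v \<in> Bs"
      have Z: "mexp (t *\<^sub>R A_std m \<tau> L) *v (B_std \<tau> *v v) = mk2 (xS v t *\<^sub>R v) (yS v t *\<^sub>R v)"
        using sm(1)[OF v v, of t] .
      have "C_std LG *v (mexp (t *\<^sub>R A_std m \<tau> L) *v (B_std \<tau> *v v)) = xS v t *\<^sub>R (S *v v)"
        unfolding Z C_std_mv S_def by (simp add: matrix_vector_mult_scaleR)
      then show "(C_std LG *v (mexp (t *\<^sub>R A_std m \<tau> L) *v (B_std \<tau> *v v)))
               \<bullet> (C_std LG *v (mexp (t *\<^sub>R A_std m \<tau> L) *v (B_std \<tau> *v v)))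
             = (\<alpha> * lam v) * (xS v t)^2"
        using Sv[of v] by (simp add: power2_eq_square mult_ac)
    qed
    also have "\<dots> = (\<Sum>v\<in>Bp. (\<alpha> * lam v) * (xS v t)^2)"
      by (rule sum.mono_neutral_right[OF finBs BpBs]) (simp add: lamz)
    finally show ?thesis .
  qed
  have hS: "h2sq (A_std m \<tau> (laplacian b)) (B_std \<tau>) (C_std (\<alpha> *\<^sub>R laplacian b))
      = set_lebesgue_integral lborel {0..} (\<lambda>t. \<Sum>v\<in>Bp. (\<alpha> * lam v) * (xS v t)^2)"
    unfolding h2sq_def L_def[symmetric] LG_def[symmetric] intS ..
  have exS: "\<exists>W. (\<forall>t. (W has_real_derivative (- ((\<alpha> * lam v) * (xS v t)^2))) (at t)) \<and> (W \<longlongrightarrow> 0) at_top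
     \<and> W 0 = (\<alpha> * lam v) * (1/\<tau>) / (2 * (m/\<tau> * lam v))"
    if v: "v \<in> Bp" for v
  proof -
    have vB: "v \<in> Bs" and lp: "lam v > 0" using v unfolding Bp_def by auto
    show ?thesis
    proof (rule std_scalar_ex)
      show "m/\<tau> * lam v > 0" "1/\<tau> > 0" "0 \<le> \<alpha> * lam v"
        using mp tp al lp by simp_all
      show "(xS v has_real_derivative yS v t) (at t)" for t using sm(2)[OF vB vB] .
      show "(yS v has_real_derivative (- (m/\<tau> * lam v) * xS v t - 1/\<tau> * yS v t)) (at t)" for t
        by (rule deriv_eqI[OF sm(3)[OF vB vB]]) simp
      show "xS v 0 = 0" "yS v 0 = 1/\<tau>" using sm(4,5)[OF vB vB] by simp_all
    qed
  qed
  then obtain WS where WS: "\<And>v. v \<in> Bp \<Longrightarrow> (\<forall>t. (WS v has_real_derivative (- ((\<alpha> * lam v) * (xS v t)^2))) (at t))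
      \<and> (WS v \<longlongrightarrow> 0) at_top \<and> WS v 0 = (\<alpha> * lam v) * (1/\<tau>) / (2 * (m/\<tau> * lam v))"
    by metis
  have valS: "set_lebesgue_integral lborel {0..} (\<lambda>t. \<Sum>v\<in>Bp. (\<alpha> * lam v) * (xS v t)^2) = (\<Sum>v\<in>Bp. WS v 0)"
  proof (rule h2_ftc[OF finBp])
    show "\<And>v t. v \<in> Bp \<Longrightarrow> (xS v has_real_derivative yS v t) (at t)" using sm(2) BpBs by blast
    show "\<And>v t. v \<in> Bp \<Longrightarrow> (WS v has_real_derivative - (\<alpha> * lam v * (xS v t)\<^sup>2)) (at t)" using WS by blast
    show "\<And>v. v \<in> Bp \<Longrightarrow> (WS v \<longlongrightarrow> 0) at_top" using WS by blast
    show "\<And>v. v \<in> Bp \<Longrightarrow> 0 \<le> \<alpha> * lam v" using al lam0 by simp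
  qed

  have "(\<Sum>v\<in>Bp. WD v 0) < (\<Sum>v\<in>Bp. WS v 0)"
  proof (rule sum_strict_mono[OF finBp Bp_ne])
    fix v assume v: "v \<in> Bp"
    have lp: "lam v > 0" using v unfolding Bp_def by auto
    define a where "a = m/\<tau> * lam v"
    define c where "c = 1/\<tau>"
    define e where "e = 1/k"
    define f where "f = \<gamma>/k * lam v"
    define q where "q = \<alpha> * lam v"
    have pos: "a > 0" "c > 0" "e > 0" "f > 0" "q > 0"
      unfolding a_def c_def e_def f_def q_def using mp tp kp gp al lp by simp_all
    have "WD v 0 = (q * c / (2 * a)) * (((c + f) * f + a) / (a + (c + f) * (e + f)))"
      using WD[OF v] unfolding a_def c_def e_def f_def q_def by simp
    also have "\<dots> < (q * c / (2 * a)) * 1"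
    proof (rule mult_strict_left_mono)
      have h1: "0 < c*e" "0 < e*f" using pos by simp_all
      have "(c + f) * f + a < a + (c + f) * (e + f)" using h1 by (simp add: algebra_simps add_pos_pos)
      then show "((c + f) * f + a) / (a + (c + f) * (e + f)) < 1" using pos
        by (subst divide_less_eq_1_pos) (auto intro: add_pos_pos)
      show "0 < q * c / (2 * a)" using pos by simp
    qed
    also have "\<dots> = WS v 0" using WS[OF v] unfolding a_def c_def q_def by simp
    finally show "WD v 0 < WS v 0" .
  qed
  then show ?thesis unfolding hD hS valD valS .
qed

end
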